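(* Let $k\ge2$, $m\ge1$, $N_1=n-mk\ge0$, $N_2=m$; let $\eta_1\in\mathbb C$ with $\hbar=k\eta_1$, $t_1=e^{\eta_1/2}$ (so $q=t_1^k$). Let $S_0=\bigsqcup_{\ell=1}^{N_2}\{e_{N_1+k(\ell-1)+j}-e_{N_1+k(\ell-1)+j+1}:1\le j\le k-1\}$, $\mathcal D_0=\{x: x_j-x_{j+1}=\eta_1$ whenever $e_j-e_{j+1}\in S_0\}$, with coordinates $x_1,\dots,x_{N_1}$ and $y_\ell=\frac1k\sum_{s=0}^{k-1}x_{N_1+k\ell-s}$. Then the restriction of the Koornwinder operator $M_{-e_1}$ to $\mathcal D_0$ is well defined and $$\overline{M_{-e_1}}=(t_0t_n)^{-1}\mathcal M_{N_1,N_2}+\kappa_t,$$ where $\mathcal M_{N_1,N_2}$ is the generalized Koornwinder operator with parameters $s=t_1$, $\xi=\eta_1$, $a=t_0u_0q^{-1}$, $b=-t_0u_0^{-1}q^{-1}$, $c=t_nu_n$, $d=-t_nu_n^{-1}$.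
   Context: $V=\mathbb C^n$, orthonormal basis $e_i$, coordinates $x_i$; $\hbar\in\mathbb C\setminus\pi i\mathbb Q$, $q=e^{\hbar/2}$; $t_0,t_1,t_n,u_0,u_n\in\mathbb C^*$. $g(z;a,b)=\frac{ae^z-a^{-1}}{be^z-b^{-1}}$; $\mathsf T^a_z$ is the shift $z\mapsto z+a$. Koornwinder operator: $M_{-e_1}=\sum_{i=1}^n\sum_{\epsilon=\pm1}(t_0t_n)^{-1}\prod_{j\ne i}g(\epsilon x_i-x_j;t_1,1)g(\epsilon x_i+x_j;t_1,1)\cdot\frac{(1-t_0u_0q^{-1}e^{\epsilon x_i})(1+t_0u_0^{-1}q^{-1}e^{\epsilon x_i})(1-t_nu_ne^{\epsilon x_i})(1+t_nu_n^{-1}e^{\epsilon x_i})}{(1-q^{-2}e^{2\epsilon x_i})(1-e^{2\epsilon x_i})}(\mathsf T^{-\epsilon\hbar}_{x_i}-1)+\kappa_t$, with $\kappa_t=\frac{t_1^n-t_1^{-n}}{t_1-t_1^{-1}}(t_0t_nt_1^{n-1}+t_0^{-1}t_n^{-1}t_1^{1-n})$. Generalized Koornwinder operator, acting on functions of $x_1..x_{N_1},y_1..y_{N_2}$ with parameters $\hbar,\xi,a,b,c,d$, $q=e^{\hbar/2}$, $s=e^{\xi/2}$: $\mathcal M_{N_1,N_2}=\sum_{i\le N_1,\epsilon=\pm1}A_i^\epsilon(\mathsf T^{-\epsilon\hbar}_{x_i}-1)+\frac{1-q^{-2}}{1-s^{-2}}\sum_{\ell\le N_2,\epsilon=\pm1}B_\ell^\epsilon(\mathsf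 T^{-\epsilon\xi}_{y_\ell}-1)$, where $A_i^\epsilon=\prod_{j\ne i}g(\epsilon x_i-x_j;s,1)g(\epsilon x_i+x_j;s,1)\prod_{\ell'}g(\epsilon x_i-y_{\ell'};q^{1/2}s^{1/2},q^{-1/2}s^{1/2})g(\epsilon x_i+y_{\ell'};q^{1/2}s^{1/2},q^{-1/2}s^{1/2})\frac{(1-ae^{\epsilon x_i})(1-be^{\epsilon x_i})(1-ce^{\epsilon x_i})(1-de^{\epsilon x_i})}{(1-q^{-2}e^{2\epsilon x_i})(1-e^{2\epsilon x_i})}$, $B_\ell^\epsilon=\prod_{j}g(\epsilon y_\ell-x_j;q^{1/2}s^{1/2},q^{1/2}s^{-1/2})g(\epsilon y_\ell+x_j;q^{1/2}s^{1/2},q^{1/2}s^{-1/2})\prod_{\ell'\ne\ell}g(\epsilon y_\ell-y_{\ell'};q,1)g(\epsilon y_\ell+y_{\ell'};q,1)\frac{\prod_{p\in\{a,b,c,d\}}(1-pqs^{-1}e^{\epsilon y_\ell})}{(1-s^{-2}e^{2\epsilon y_\ell})(1-e^{2\epsilon y_\ell})}$. Restriction: writing $\mathsf T^{-\epsilon\hbar}_{x_i}=\tau(\epsilon e_i)$ with $(\tau(\lambda)f)(x)=f(x-\hbar\lambda)$, an operator $D=\sum_\lambda g_\lambda\tau(\lambda)$ restricts to $\overline D=\sum_{\lambda'}\big(\sum_{\bar\lambda=\lambda'}g_\lambda\big)|_{\mathcal D_0}\tau(\lambda')$, where $\bar\lambda$ is the orthogonal projection onto $\overline V=\{x:(\alpha,x)=0\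 \forall\alpha\in S_0\}$, provided each restricted coefficient is a well-defined meromorphic function on $\mathcal D_0$. *)

theory Defs
  imports Complex_Main
begin

definition g :: "complex \<Rightarrow> complex \<Rightarrow> complex \<Rightarrow> complex" where
  "g z a b = (a * exp z - inverse a) / (b * exp z - inverse b)"

definition gden :: "complex \<Rightarrow> complex \<Rightarrow> complex" where
  "gden z b = b * exp z - inverse b"

text \<open>Vector c e_i (indices are 1-based; vectors are functions on nat).\<close>
definition unitv :: "nat \<Rightarrow> 'a::zero \<Rightarrow> nat \<Rightarrow> 'a" where
  "unitv i c = (\<lambda>j. if j = i then c else 0)"

text \<open>A difference operator D = sum_lam g_lam tau(lam) on C^n is represented by its
  coefficient map  D :: shift vector (nat => real, supported in 1..n) => point => complex,
  together with a finite support set of shift vectors; (tau(lam) f)(x) = f(x - hbar lam).\<close>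

definition ip :: "nat \<Rightarrow> (nat \<Rightarrow> real) \<Rightarrow> (nat \<Rightarrow> real) \<Rightarrow> real" where
  "ip n \<alpha> \<mu> = (\<Sum>j=1..n. \<alpha> j * \<mu> j)"

definition Vbar :: "nat \<Rightarrow> (nat \<Rightarrow> real) set \<Rightarrow> (nat \<Rightarrow> real) set" where
  "Vbar n S0 = {\<mu>. (\<forall>j. j \<notin> {1..n} \<longrightarrow> \<mu> j = 0) \<and> (\<forall>\<alpha>\<in>S0. ip n \<alpha> \<mu> = 0)}"

definition proj :: "nat \<Rightarrow> (nat \<Rightarrow> real) set \<Rightarrow> (nat \<Rightarrow> real) \<Rightarrow> (nat \<Rightarrow> real)" where
  "proj n S0 lam = (THE \<mu>. \<mu> \<in> Vbar n S0 \<and>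
      (\<exists>c. \<forall>j. lam j - \<mu> j = (\<Sum>\<alpha>\<in>S0. c \<alpha> * \<alpha> j)))"

text \<open>Coefficient of tau(lam') in the restricted operator (before restriction of the point).\<close>
definition restrict_coeff ::
  "nat \<Rightarrow> (nat \<Rightarrow> real) set \<Rightarrow> (nat \<Rightarrow> real) set \<Rightarrow>
   ((nat \<Rightarrow> real) \<Rightarrow> (nat \<Rightarrow> complex) \<Rightarrow> complex) \<Rightarrow>
   (nat \<Rightarrow> real) \<Rightarrow> (nat \<Rightarrow> complex) \<Rightarrow> complex" where
  "restrict_coeff n S0 supp D lam' x = (\<Sum>lam\<in>{lam\<in>supp. proj n S0 lam = lam'}. D lam x)"

definition koorn_C ::
  "nat \<Rightarrow> complex \<Rightarrow> complex \<Rightarrow> complex \<Rightarrow> complex \<Rightarrow> complex \<Rightarrow> complex \<Rightarrow>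
   nat \<Rightarrow> real \<Rightarrow> (nat \<Rightarrow> complex) \<Rightarrow> complex" where
  "koorn_C n hb t0 t1 tn u0 un i \<epsilon> x =
    (let q = exp (hb / 2); e = complex_of_real \<epsilon>; X = exp (e * x i) in
     inverse (t0 * tn) *
     (\<Prod>j\<in>{1..n} - {i}. g (e * x i - x j) t1 1 * g (e * x i + x j) t1 1) *
     ((1 - t0 * u0 * inverse q * X) * (1 + t0 * inverse u0 * inverse q * X) *
      (1 - tn * un * X) * (1 + tn * inverse un * X)) /
     ((1 - (inverse q)^2 * exp (2 * e * x i)) * (1 - exp (2 * e * x i))))"

definition kappa_t :: "nat \<Rightarrow> complex \<Rightarrow> complex \<Rightarrow> complex \<Rightarrow> complex" where
  "kappa_t n t0 t1 tn =
     (t1 ^ n - (inverse t1) ^ n) / (t1 - inverse t1) *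
     (t0 * tn * t1 ^ (n - 1) + inverse t0 * inverse tn * (inverse t1) ^ (n - 1))"

text \<open>Coefficient map of M_{-e_1} = sum_{i,eps} C_i^eps (tau(eps e_i) - 1) + kappa_t.\<close>
definition koorn_op ::
  "nat \<Rightarrow> complex \<Rightarrow> complex \<Rightarrow> complex \<Rightarrow> complex \<Rightarrow> complex \<Rightarrow> complex \<Rightarrow>
   (nat \<Rightarrow> real) \<Rightarrow> (nat \<Rightarrow> complex) \<Rightarrow> complex" where
  "koorn_op n hb t0 t1 tn u0 un lam x =
     (\<Sum>i\<in>{1..n}. \<Sum>\<epsilon>\<in>{1,-1}.
        if lam = unitv i \<epsilon> then koorn_C n hb t0 t1 tn u0 un i \<epsilon> x else 0) +
     (if lam = (\<lambda>_. 0) then kappa_t n t0 t1 tn -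
        (\<Sum>i\<in>{1..n}. \<Sum>\<epsilon>\<in>{1,-1}. koorn_C n hb t0 t1 tn u0 un i \<epsilon> x) else 0)"

definition koorn_supp :: "nat \<Rightarrow> (nat \<Rightarrow> real) set" where
  "koorn_supp n = {unitv i \<epsilon> | i \<epsilon>. i \<in> {1..n} \<and> \<epsilon> \<in> {1, -1}} \<union> {\<lambda>_. 0}"

definition koorn_regular :: "nat \<Rightarrow> complex \<Rightarrow> (nat \<Rightarrow> complex) \<Rightarrow> bool" where
  "koorn_regular n hb x =
     (\<forall>i\<in>{1..n}. \<forall>\<epsilon>\<in>{1, -1::real}. let e = complex_of_real \<epsilon>; q = exp (hb / 2) in
        (\<forall>j\<in>{1..n} - {i}. gden (e * x i - x j) 1 \<noteq> 0 \<and> gden (e * x i + x j) 1 \<noteq> 0) \<and>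
        1 - (inverse q)^2 * exp (2 * e * x i) \<noteq> 0 \<and> 1 - exp (2 * e * x i) \<noteq> 0)"

text \<open>Functions of (x_1..x_N1, y_1..y_N2) are represented as functions of z :: nat => complex
  with x_i = z i (1 <= i <= N1) and y_l = z (N1 + l) (1 <= l <= N2).
  q^{1/2} = exp(hbar/4), s^{1/2} = exp(xi/4).\<close>

definition gk_A ::
  "nat \<Rightarrow> nat \<Rightarrow> complex \<Rightarrow> complex \<Rightarrow> complex \<Rightarrow> complex \<Rightarrow> complex \<Rightarrow> complex \<Rightarrow>
   nat \<Rightarrow> real \<Rightarrow> (nat \<Rightarrow> complex) \<Rightarrow> complex" where
  "gk_A N1 N2 hb xi a b c d i \<epsilon> z =
    (let q = exp (hb / 2); s = exp (xi / 2); qh = exp (hb / 4); sh = exp (xi / 4);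
         e = complex_of_real \<epsilon>; X = exp (e * z i) in
     (\<Prod>j\<in>{1..N1} - {i}. g (e * z i - z j) s 1 * g (e * z i + z j) s 1) *
     (\<Prod>l\<in>{1..N2}. g (e * z i - z (N1 + l)) (qh * sh) (inverse qh * sh) *
                    g (e * z i + z (N1 + l)) (qh * sh) (inverse qh * sh)) *
     ((1 - a * X) * (1 - b * X) * (1 - c * X) * (1 - d * X)) /
     ((1 - (inverse q)^2 * exp (2 * e * z i)) * (1 - exp (2 * e * z i))))"

definition gk_B ::
  "nat \<Rightarrow> nat \<Rightarrow> complex \<Rightarrow> complex \<Rightarrow> complex \<Rightarrow> complex \<Rightarrow> complex \<Rightarrow> complex \<Rightarrow>
   nat \<Rightarrow> real \<Rightarrow> (nat \<Rightarrow> complex) \<Rightarrow> complex" where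
  "gk_B N1 N2 hb xi a b c d l \<epsilon> z =
    (let q = exp (hb / 2); s = exp (xi / 2); qh = exp (hb / 4); sh = exp (xi / 4);
         e = complex_of_real \<epsilon>; y = z (N1 + l); Y = exp (e * y) in
     (\<Prod>j\<in>{1..N1}. g (e * y - z j) (qh * sh) (qh * inverse sh) *
                   g (e * y + z j) (qh * sh) (qh * inverse sh)) *
     (\<Prod>l'\<in>{1..N2} - {l}. g (e * y - z (N1 + l')) q 1 * g (e * y + z (N1 + l')) q 1) *
     ((1 - a * q * inverse s * Y) * (1 - b * q * inverse s * Y) *
      (1 - c * q * inverse s * Y) * (1 - d * q * inverse s * Y)) /
     ((1 - (inverse s)^2 * exp (2 * e * y)) * (1 - exp (2 * e * y))))"

text \<open>Coefficient map of M_{N1,N2}, indexed by the displacement delta of the argument: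
  the term  h(z) f(z - delta).  So T^{-eps hbar}_{x_i} has delta = eps hbar e_i and
  T^{-eps xi}_{y_l} has delta = eps xi e_{N1+l}.\<close>
definition gk_op ::
  "nat \<Rightarrow> nat \<Rightarrow> complex \<Rightarrow> complex \<Rightarrow> complex \<Rightarrow> complex \<Rightarrow> complex \<Rightarrow> complex \<Rightarrow>
   (nat \<Rightarrow> complex) \<Rightarrow> (nat \<Rightarrow> complex) \<Rightarrow> complex" where
  "gk_op N1 N2 hb xi a b c d \<delta> z =
    (let cB = (1 - (inverse (exp (hb / 2)))^2) / (1 - (inverse (exp (xi / 2)))^2) in
     (\<Sum>i\<in>{1..N1}. \<Sum>\<epsilon>\<in>{1,-1}.
        if \<delta> = unitv i (complex_of_real \<epsilon> * hb) then gk_A N1 N2 hb xi a b c d i \<epsilon> z else 0) +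
     (\<Sum>l\<in>{1..N2}. \<Sum>\<epsilon>\<in>{1,-1}.
        if \<delta> = unitv (N1 + l) (complex_of_real \<epsilon> * xi) then cB * gk_B N1 N2 hb xi a b c d l \<epsilon> z else 0) +
     (if \<delta> = (\<lambda>_. 0) then
        - (\<Sum>i\<in>{1..N1}. \<Sum>\<epsilon>\<in>{1,-1}. gk_A N1 N2 hb xi a b c d i \<epsilon> z)
        - cB * (\<Sum>l\<in>{1..N2}. \<Sum>\<epsilon>\<in>{1,-1}. gk_B N1 N2 hb xi a b c d l \<epsilon> z)
      else 0))"

definition gk_regular :: "nat \<Rightarrow> nat \<Rightarrow> complex \<Rightarrow> complex \<Rightarrow> (nat \<Rightarrow> complex) \<Rightarrow> bool" where
  "gk_regular N1 N2 hb xi z =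
    (let q = exp (hb / 2); s = exp (xi / 2); qh = exp (hb / 4); sh = exp (xi / 4) in
     (\<forall>i\<in>{1..N1}. \<forall>\<epsilon>\<in>{1, -1::real}. let e = complex_of_real \<epsilon> in
        (\<forall>j\<in>{1..N1} - {i}. gden (e * z i - z j) 1 \<noteq> 0 \<and> gden (e * z i + z j) 1 \<noteq> 0) \<and>
        (\<forall>l\<in>{1..N2}. gden (e * z i - z (N1 + l)) (inverse qh * sh) \<noteq> 0 \<and>
                     gden (e * z i + z (N1 + l)) (inverse qh * sh) \<noteq> 0) \<and>
        1 - (inverse q)^2 * exp (2 * e * z i) \<noteq> 0 \<and> 1 - exp (2 * e * z i) \<noteq> 0) \<and>
     (\<forall>l\<in>{1..N2}. \<forall>\<epsilon>\<in>{1, -1::real}. let e = complex_of_real \<epsilon>; y = z (N1 + l) in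
        (\<forall>j\<in>{1..N1}. gden (e * y - z j) (qh * inverse sh) \<noteq> 0 \<and>
                     gden (e * y + z j) (qh * inverse sh) \<noteq> 0) \<and>
        (\<forall>l'\<in>{1..N2} - {l}. gden (e * y - z (N1 + l')) 1 \<noteq> 0 \<and> gden (e * y + z (N1 + l')) 1 \<noteq> 0) \<and>
        1 - (inverse s)^2 * exp (2 * e * y) \<noteq> 0 \<and> 1 - exp (2 * e * y) \<noteq> 0))"

definition simple_root :: "nat \<Rightarrow> nat \<Rightarrow> real" where
  "simple_root p = (\<lambda>j. if j = p then 1 else if j = Suc p then -1 else 0)"

definition S0_blocks :: "nat \<Rightarrow> nat \<Rightarrow> nat \<Rightarrow> (nat \<Rightarrow> real) set" where
  "S0_blocks N1 k N2 = {simple_root (N1 + k * (l - 1) + j) | l j. l \<in> {1..N2} \<and> j \<in> {1..k - 1}}"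

definition D0 :: "nat \<Rightarrow> (nat \<Rightarrow> real) set \<Rightarrow> complex \<Rightarrow> (nat \<Rightarrow> complex) set" where
  "D0 n S0 \<eta>1 = {x. (\<forall>j. j \<notin> {1..n} \<longrightarrow> x j = 0) \<and>
                    (\<forall>p. simple_root p \<in> S0 \<longrightarrow> x p - x (Suc p) = \<eta>1)}"

definition coordmap :: "nat \<Rightarrow> nat \<Rightarrow> nat \<Rightarrow> (nat \<Rightarrow> complex) \<Rightarrow> nat \<Rightarrow> complex" where
  "coordmap N1 k N2 x = (\<lambda>i.
     if 1 \<le> i \<and> i \<le> N1 then x i
     else if N1 < i \<and> i \<le> N1 + N2 then (1 / of_nat k) * (\<Sum>s<k. x (N1 + k * (i - N1) - s))
     else 0)"

end

theory Submission
  imports Defs "HOL-Analysis.Analysis"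
begin


lemma exp_int_ne1:
  fixes hb \<eta> :: complex and k :: nat and d :: int
  assumes hq: "\<forall>r\<in>(\<rat>::real set). hb \<noteq> \<i> * complex_of_real (pi * r)"
    and hk: "hb = of_nat k * \<eta>" and d: "d \<noteq> 0"
  shows "exp (of_int d * \<eta>) \<noteq> 1"
proof
  assume "exp (of_int d * \<eta>) = 1"
  then obtain n :: int where re: "Re (of_int d * \<eta>) = 0" and im: "Im (of_int d * \<eta>) = real_of_int (2*n) * pi"
    by (auto simp: exp_eq_1)
  have reeta: "Re \<eta> = 0" using re d by simp
  have imeta: "Im \<eta> = real_of_int (2*n) * pi / real_of_int d" using im d by (simp add: field_simps)
  define r where "r = real_of_int (2*n*int k) / real_of_int d"
  have "r \<in> \<rat>" unfolding r_def by (intro Rats_divide Rats_of_int)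
  moreover have "hb = \<i> * complex_of_real (pi * r)"
    by (rule complex_eqI) (simp_all add: hk reeta imeta r_def field_simps)
  ultimately show False using hq by blast
qed


lemma g_step:
  fixes z \<eta> :: complex
  assumes "exp z \<noteq> 1"
  shows "g z (exp (\<eta>/2)) 1 * (exp z - 1) = inverse (exp (\<eta>/2)) * (exp (z + \<eta>) - 1)"
proof -
  have e: "exp (z + \<eta>) = exp z * exp (\<eta>/2) * exp (\<eta>/2)"
  proof -
    have "z + \<eta> = z + \<eta>/2 + \<eta>/2" by simp
    then show ?thesis by (simp only: mult_exp_exp)
  qed
  have "exp z - 1 \<noteq> 0" using assms by simp
  then show ?thesis unfolding g_def e by (simp add: field_simps)
qed

lemma tele_up:
  fixes w \<eta> :: complex
  assumes "\<forall>j<K. exp (w + of_nat j * \<eta>) \<noteq> 1"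
  shows "(\<Prod>j<K. g (w + of_nat j * \<eta>) (exp (\<eta>/2)) 1) * (exp w - 1)
         = inverse (exp (\<eta>/2)) ^ K * (exp (w + of_nat K * \<eta>) - 1)"
  using assms
proof (induction K)
  case 0
  then show ?case by simp
next
  case (Suc K)
  have IH: "(\<Prod>j<K. g (w + of_nat j * \<eta>) (exp (\<eta>/2)) 1) * (exp w - 1)
         = inverse (exp (\<eta>/2)) ^ K * (exp (w + of_nat K * \<eta>) - 1)"
    using Suc by auto
  have st: "g (w + of_nat K * \<eta>) (exp (\<eta>/2)) 1 * (exp (w + of_nat K * \<eta>) - 1)
     = inverse (exp (\<eta>/2)) * (exp (w + of_nat K * \<eta> + \<eta>) - 1)"
    by (rule g_step) (use Suc.prems in auto)
  have "(\<Prod>j<Suc K. g (w + of_nat j * \<eta>) (exp (\<eta>/2)) 1) * (exp w - 1)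
     = g (w + of_nat K * \<eta>) (exp (\<eta>/2)) 1 * ((\<Prod>j<K. g (w + of_nat j * \<eta>) (exp (\<eta>/2)) 1) * (exp w - 1))"
    by (simp add: ac_simps)
  also have "\<dots> = g (w + of_nat K * \<eta>) (exp (\<eta>/2)) 1 * (inverse (exp (\<eta>/2)) ^ K * (exp (w + of_nat K * \<eta>) - 1))"
    by (simp only: IH)
  also have "\<dots> = inverse (exp (\<eta>/2)) ^ K * (g (w + of_nat K * \<eta>) (exp (\<eta>/2)) 1 * (exp (w + of_nat K * \<eta>) - 1))"
    by (simp only: mult.assoc mult.left_commute)
  also have "\<dots> = inverse (exp (\<eta>/2)) ^ Suc K * (exp (w + of_nat (Suc K) * \<eta>) - 1)"
  proof -
    have "w + of_nat K * \<eta> + \<eta> = w + of_nat (Suc K) * \<eta>" by (simp add: algebra_simps)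
    then show ?thesis by (simp only: st power_Suc mult.assoc mult.left_commute)
  qed
  finally show ?case .
qed


lemma exp_num_mult: "exp (numeral n * x) = exp (x::complex) ^ numeral n"
  using exp_of_nat_mult[of "numeral n" x] by simp

lemma expfacts:
  fixes \<eta> hb w :: complex and k :: nat
  assumes hk: "hb = of_nat k * \<eta>"
  shows "exp (hb/4) = exp (\<eta>/4) ^ k"
    and "exp (hb/2) = (exp (\<eta>/4) ^ k)^2"
    and "exp (\<eta>/2) = exp (\<eta>/4) ^ 2"
    and "exp (w + (of_nat k - 1) * \<eta> / 2) = exp w * (exp (\<eta>/4) ^ k)^2 / exp (\<eta>/4) ^ 2"
    and "exp (w - (of_nat k - 1) * \<eta> / 2) = exp w * exp (\<eta>/4) ^ 2 / (exp (\<eta>/4) ^ k)^2"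
    and "exp (w + of_nat k * \<eta>) = exp w * (exp (\<eta>/4) ^ k) ^ 4"
proof -
  have a: "exp (of_nat k * (\<eta>/4)) = exp (\<eta>/4) ^ k" by (rule exp_of_nat_mult)
  show h4: "exp (hb/4) = exp (\<eta>/4) ^ k" using a by (simp add: hk)
  have "exp (hb/2) = exp (2 * (hb/4))" by simp
  also have "\<dots> = exp (hb/4) ^ 2" by (rule exp_num_mult)
  finally show "exp (hb/2) = (exp (\<eta>/4) ^ k)^2" using h4 by simp
  have "exp (\<eta>/2) = exp (2 * (\<eta>/4))" by simp
  also have "\<dots> = exp (\<eta>/4) ^ 2" by (rule exp_num_mult)
  finally show h2: "exp (\<eta>/2) = exp (\<eta>/4) ^ 2" .
  have b: "exp (2 * (of_nat k * (\<eta>/4))) = (exp (\<eta>/4) ^ k)^2"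
    by (simp only: exp_num_mult a)
  have c: "exp (2 * (\<eta>/4)) = exp (\<eta>/4) ^ 2" by (rule exp_num_mult)
  have "w + (of_nat k - 1) * \<eta> / 2 = w + 2 * (of_nat k * (\<eta>/4)) - 2 * (\<eta>/4)"
    by (simp add: field_simps)
  then show "exp (w + (of_nat k - 1) * \<eta> / 2) = exp w * (exp (\<eta>/4) ^ k)^2 / exp (\<eta>/4) ^ 2"
    by (simp only: exp_diff exp_add b c)
  have "w - (of_nat k - 1) * \<eta> / 2 = w + 2 * (\<eta>/4) - 2 * (of_nat k * (\<eta>/4))"
    by (simp add: field_simps)
  then show "exp (w - (of_nat k - 1) * \<eta> / 2) = exp w * exp (\<eta>/4) ^ 2 / (exp (\<eta>/4) ^ k)^2"
    by (simp only: exp_diff exp_add b c)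
  have d: "exp (4 * (of_nat k * (\<eta>/4))) = (exp (\<eta>/4) ^ k)^4"
    by (simp only: exp_num_mult a)
  have "w + of_nat k * \<eta> = w + 4 * (of_nat k * (\<eta>/4))" by simp
  then show "exp (w + of_nat k * \<eta>) = exp w * (exp (\<eta>/4) ^ k) ^ 4"
    by (simp only: exp_add d)
qed

lemma G1:
  fixes \<eta> hb w :: complex and k :: nat
  assumes hk: "hb = of_nat k * \<eta>" and E: "exp w \<noteq> 1"
  shows "g (w + (of_nat k - 1) * \<eta> / 2) (exp (hb/4) * exp (\<eta>/4)) (inverse (exp (hb/4)) * exp (\<eta>/4))
          * (exp w - 1) = inverse (exp (\<eta>/2)) ^ k * (exp (w + of_nat k * \<eta>) - 1)"
proof -
  note ef = expfacts[OF hk]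
  define S where "S = exp (\<eta>/4)"
  define K where "K = S ^ k"
  define X where "X = exp w"
  have S0: "S \<noteq> 0" and K0: "K \<noteq> 0" unfolding K_def S_def by simp_all
  have X1: "X - 1 \<noteq> 0" using E X_def by simp
  have ik: "inverse (S^2) ^ k = inverse K ^ 2"
    by (simp add: K_def power_mult[symmetric] mult.commute power_inverse)
  have den: "inverse K * S * (X * K^2 / S^2) - inverse (inverse K * S) = K * (X - 1) / S"
    using S0 K0 by (simp add: field_simps power2_eq_square)
  have den0: "K * (X - 1) / S \<noteq> 0" using S0 K0 X1 by simp
  show ?thesis
    unfolding g_def ef(1,3,4,6) S_def[symmetric] K_def[symmetric] X_def[symmetric] ik den
    using S0 K0 X1 den0 by (simp add: field_simps, algebra)
qed

lemma G2:
  fixes \<eta> hb w :: complex and k :: nat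
  assumes hk: "hb = of_nat k * \<eta>" and E: "exp w \<noteq> 1"
  shows "g (w - (of_nat k - 1) * \<eta> / 2) (exp (hb/4) * exp (\<eta>/4)) (exp (hb/4) * inverse (exp (\<eta>/4)))
          = g w (exp (\<eta>/2)) 1"
proof -
  note ef = expfacts[OF hk]
  define S where "S = exp (\<eta>/4)"
  define K where "K = S ^ k"
  define X where "X = exp w"
  have S0: "S \<noteq> 0" and K0: "K \<noteq> 0" unfolding K_def S_def by simp_all
  have X1: "X - 1 \<noteq> 0" using E X_def by simp
  have den: "K * inverse S * (X * S^2 / K^2) - inverse (K * inverse S) = S * (X - 1) / K"
    using S0 K0 by (simp add: field_simps power2_eq_square)
  have den0: "S * (X - 1) / K \<noteq> 0" using S0 K0 X1 by simp
  show ?thesis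
    unfolding g_def ef(1,3,5) S_def[symmetric] K_def[symmetric] X_def[symmetric] den
    using S0 K0 X1 den0 by (simp add: field_simps, algebra)
qed

lemma G3:
  fixes \<eta> hb w :: complex and k :: nat
  assumes hk: "hb = of_nat k * \<eta>" and False: "exp w \<noteq> 1"
  shows "g w (exp (hb/2)) 1 * (exp w - 1) = inverse (exp (\<eta>/2)) ^ k * (exp (w + of_nat k * \<eta>) - 1)"
proof -
  note ef = expfacts[OF hk]
  define S where "S = exp (\<eta>/4)"
  define K where "K = S ^ k"
  define X where "X = exp w"
  have S0: "S \<noteq> 0" and K0: "K \<noteq> 0" unfolding K_def S_def by simp_all
  have X1: "X - 1 \<noteq> 0" using False X_def by simp
  have ik: "inverse (S^2) ^ k = inverse K ^ 2"
    by (simp add: K_def power_mult[symmetric] mult.commute power_inverse)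
  show ?thesis
    unfolding g_def ef(2,3,6) S_def[symmetric] K_def[symmetric] X_def[symmetric] ik
    using S0 K0 X1 by (simp add: field_simps)
qed


lemma cancel_mult: fixes a b d r :: complex
  shows "a * d = r \<Longrightarrow> b * d = r \<Longrightarrow> d \<noteq> 0 \<Longrightarrow> a = b"
  by (metis mult_right_cancel)

lemma TP1:
  fixes u v \<eta> :: complex and xb :: "nat \<Rightarrow> complex"
  assumes xb: "\<forall>r<k. xb r = v - of_nat r * \<eta>"
    and nz: "\<forall>r<k. exp (u - xb r) \<noteq> 1"
  shows "(\<Prod>r<k. g (u - xb r) (exp (\<eta>/2)) 1) * (exp (u - v) - 1)
       = inverse (exp (\<eta>/2)) ^ k * (exp (u - v + of_nat k * \<eta>) - 1)"
proof -
  have "(\<Prod>r<k. g (u - xb r) (exp (\<eta>/2)) 1) = (\<Prod>r<k. g (u - v + of_nat r * \<eta>) (exp (\<eta>/2)) 1)"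
  proof (rule prod.cong)
    fix r assume "r \<in> {..<k}"
    then have "u - xb r = u - v + of_nat r * \<eta>" using xb by (simp add: algebra_simps)
    then show "g (u - xb r) (exp (\<eta>/2)) 1 = g (u - v + of_nat r * \<eta>) (exp (\<eta>/2)) 1" by (simp only:)
  qed simp
  moreover have "\<forall>j<k. exp (u - v + of_nat j * \<eta>) \<noteq> 1"
    using nz xb by (auto simp: algebra_simps)
  ultimately show ?thesis using tele_up[of k "u - v" \<eta>] by simp
qed

lemma TP2:
  fixes u v \<eta> :: complex and xb :: "nat \<Rightarrow> complex"
  assumes xb: "\<forall>r<k. xb r = v - of_nat r * \<eta>"
    and nz: "\<forall>r<k. exp (u + xb r) \<noteq> 1"
  shows "(\<Prod>r<k. g (u + xb r) (exp (\<eta>/2)) 1) * (exp (u + v - (of_nat k - 1) * \<eta>) - 1)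
       = inverse (exp (\<eta>/2)) ^ k * (exp (u + v - (of_nat k - 1) * \<eta> + of_nat k * \<eta>) - 1)"
proof -
  define w where "w = u + v - (of_nat k - 1) * \<eta>"
  define f where "f j = g (w + of_nat j * \<eta>) (exp (\<eta>/2)) 1" for j
  have eq: "u + xb r = w + of_nat (k - Suc r) * \<eta>" if "r < k" for r
    using that xb by (simp add: w_def of_nat_diff algebra_simps)
  have "(\<Prod>r<k. g (u + xb r) (exp (\<eta>/2)) 1) = (\<Prod>r<k. f (k - Suc r))"
    by (rule prod.cong) (auto simp: f_def eq)
  also have "\<dots> = (\<Prod>r<k. f r)" by (rule prod.nat_diff_reindex)
  finally have p: "(\<Prod>r<k. g (u + xb r) (exp (\<eta>/2)) 1) = (\<Prod>r<k. f r)" .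
  have "\<forall>j<k. exp (w + of_nat j * \<eta>) \<noteq> 1"
  proof (intro allI impI)
    fix j assume j: "j < k"
    have "k - Suc (k - Suc j) = j" using j by simp
    then have "w + of_nat j * \<eta> = u + xb (k - Suc j)" using eq[of "k - Suc j"] j by simp
    then show "exp (w + of_nat j * \<eta>) \<noteq> 1" using nz j by simp
  qed
  then show ?thesis using tele_up[of k w \<eta>] unfolding p f_def w_def by simp
qed

lemma BPu:
  fixes u v \<eta> hb :: complex and xb :: "nat \<Rightarrow> complex" and k :: nat
  assumes hk: "hb = of_nat k * \<eta>" and k1: "k \<ge> 1"
    and xb: "\<forall>r<k. xb r = v - of_nat r * \<eta>"
    and nz1: "\<forall>r<k. exp (u - xb r) \<noteq> 1" and nz2: "\<forall>r<k. exp (u + xb r) \<noteq> 1"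
  shows "(\<Prod>r<k. g (u - xb r) (exp (\<eta>/2)) 1 * g (u + xb r) (exp (\<eta>/2)) 1)
   = g (u - (v - (of_nat k - 1) * \<eta> / 2)) (exp (hb/4) * exp (\<eta>/4)) (inverse (exp (hb/4)) * exp (\<eta>/4)) *
     g (u + (v - (of_nat k - 1) * \<eta> / 2)) (exp (hb/4) * exp (\<eta>/4)) (inverse (exp (hb/4)) * exp (\<eta>/4))"
proof -
  have x0: "xb 0 = v" using xb k1 by auto
  have xl: "xb (k - 1) = v - (of_nat k - 1) * \<eta>" using xb k1 by (auto simp: of_nat_diff)
  have e1: "exp (u - v) \<noteq> 1" using nz1 x0 k1 by force
  have e2: "exp (u + v - (of_nat k - 1) * \<eta>) \<noteq> 1" using nz2 xl k1
    by (metis add_diff_eq diff_less less_numeral_extra(1) order_less_le_trans)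
  have a: "(\<Prod>r<k. g (u - xb r) (exp (\<eta>/2)) 1) = g (u - (v - (of_nat k - 1) * \<eta> / 2)) (exp (hb/4) * exp (\<eta>/4)) (inverse (exp (hb/4)) * exp (\<eta>/4))"
  proof (rule cancel_mult[OF TP1[OF xb nz1]])
    show "g (u - (v - (of_nat k - 1) * \<eta> / 2)) (exp (hb/4) * exp (\<eta>/4)) (inverse (exp (hb/4)) * exp (\<eta>/4)) * (exp (u - v) - 1)
      = inverse (exp (\<eta>/2)) ^ k * (exp (u - v + of_nat k * \<eta>) - 1)"
      using G1[OF hk e1] by (simp add: algebra_simps)
    show "exp (u - v) - 1 \<noteq> 0" using e1 by simp
  qed
  have b: "(\<Prod>r<k. g (u + xb r) (exp (\<eta>/2)) 1) = g (u + (v - (of_nat k - 1) * \<eta> / 2)) (exp (hb/4) * exp (\<eta>/4)) (inverse (exp (hb/4)) * exp (\<eta>/4))"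
  proof (rule cancel_mult[OF TP2[OF xb nz2]])
    have eqn: "u + v - (of_nat k - 1) * \<eta> + (of_nat k - 1) * \<eta> / 2 = u + (v - (of_nat k - 1) * \<eta> / 2)"
      by (simp add: field_simps)
    show "g (u + (v - (of_nat k - 1) * \<eta> / 2)) (exp (hb/4) * exp (\<eta>/4)) (inverse (exp (hb/4)) * exp (\<eta>/4)) * (exp (u + v - (of_nat k - 1) * \<eta>) - 1)
      = inverse (exp (\<eta>/2)) ^ k * (exp (u + v - (of_nat k - 1) * \<eta> + of_nat k * \<eta>) - 1)"
      using G1[OF hk e2, unfolded eqn] by simp
    show "exp (u + v - (of_nat k - 1) * \<eta>) - 1 \<noteq> 0" using e2 by simp
  qed
  show ?thesis by (simp add: prod.distrib a b)
qed

lemma BPX: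
  fixes u v \<eta> hb :: complex and xb :: "nat \<Rightarrow> complex" and k :: nat
  assumes hk: "hb = of_nat k * \<eta>" and k1: "k \<ge> 1"
    and xb: "\<forall>r<k. xb r = v - of_nat r * \<eta>"
    and nz1: "\<forall>r<k. exp (u - xb r) \<noteq> 1" and nz2: "\<forall>r<k. exp (u + xb r) \<noteq> 1"
  shows "(\<Prod>r<k. g (u - xb r) (exp (\<eta>/2)) 1 * g (u + xb r) (exp (\<eta>/2)) 1)
   = g (u - v) (exp (hb/2)) 1 * g (u + v - (of_nat k - 1) * \<eta>) (exp (hb/2)) 1"
proof -
  have x0: "xb 0 = v" using xb k1 by auto
  have xl: "xb (k - 1) = v - (of_nat k - 1) * \<eta>" using xb k1 by (auto simp: of_nat_diff)
  have e1: "exp (u - v) \<noteq> 1" using nz1 x0 k1 by force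
  have e2: "exp (u + v - (of_nat k - 1) * \<eta>) \<noteq> 1" using nz2 xl k1
    by (metis add_diff_eq diff_less less_numeral_extra(1) order_less_le_trans)
  have a: "(\<Prod>r<k. g (u - xb r) (exp (\<eta>/2)) 1) = g (u - v) (exp (hb/2)) 1"
    by (rule cancel_mult[OF TP1[OF xb nz1] G3[OF hk e1]]) (use e1 in simp)
  have b: "(\<Prod>r<k. g (u + xb r) (exp (\<eta>/2)) 1) = g (u + v - (of_nat k - 1) * \<eta>) (exp (hb/2)) 1"
    by (rule cancel_mult[OF TP2[OF xb nz2] G3[OF hk e2]]) (use e2 in simp)
  show ?thesis by (simp add: prod.distrib a b)
qed


lemma solve_div: fixes a d r :: complex shows "a * d = r \<Longrightarrow> d \<noteq> 0 \<Longrightarrow> a = r / d"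
  by (simp add: eq_divide_eq)

lemma OWN:
  fixes X \<eta> hb :: complex and k :: nat
  assumes hk: "hb = of_nat k * \<eta>" and k2: "k \<ge> 2"
    and hq: "\<forall>r\<in>(\<rat>::real set). hb \<noteq> \<i> * complex_of_real (pi * r)"
    and nz: "\<forall>j<k-1. exp (2*X - of_nat (Suc j) * \<eta>) \<noteq> 1"
    and U1: "exp (2*X) \<noteq> 1"
    and U2: "1 - inverse (exp (hb/2))^2 * exp (2*X) \<noteq> 0"
    and V2: "1 - inverse (exp (\<eta>/2))^2 * exp (2*(X - (of_nat k - 1) * \<eta> / 2)) \<noteq> 0"
    and V1: "1 - exp (2*(X - (of_nat k - 1) * \<eta> / 2)) \<noteq> 0"
  shows "(\<Prod>j<k-1. g (of_nat (Suc j) * \<eta>) (exp (\<eta>/2)) 1 * g (2*X - of_nat (Suc j) * \<eta>) (exp (\<eta>/2)) 1)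
         / ((1 - inverse (exp (hb/2))^2 * exp (2*X)) * (1 - exp (2*X)))
       = ((1 - inverse (exp (hb/2))^2) / (1 - inverse (exp (\<eta>/2))^2))
         / ((1 - inverse (exp (\<eta>/2))^2 * exp (2*(X - (of_nat k - 1) * \<eta> / 2)))
            * (1 - exp (2*(X - (of_nat k - 1) * \<eta> / 2))))"
proof -
  define T where "T = exp (\<eta>/2)"
  define M where "M = T ^ (k-1)"
  define V where "V = exp (2*(X - (of_nat k - 1) * \<eta> / 2))"
  have T0: "T \<noteq> 0" and M0: "M \<noteq> 0" unfolding T_def M_def by simp_all
  have f1: "exp \<eta> = T^2"
  proof -
    have "exp \<eta> = exp (\<eta>/2 + \<eta>/2)" by simp
    then show ?thesis unfolding T_def by (simp only: exp_add power2_eq_square)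
  qed
  have kk: "k = Suc (k-1)" using k2 by simp
  have f2: "exp (hb/2) = T * M"
  proof -
    have "exp (hb/2) = exp (of_nat k * (\<eta>/2))" by (simp add: hk)
    also have "\<dots> = T ^ k" unfolding T_def by (rule exp_of_nat_mult)
    also have "\<dots> = T * M" unfolding M_def by (subst kk) simp
    finally show ?thesis .
  qed
  have T21: "T^2 \<noteq> 1" using exp_int_ne1[OF hq hk, of 1] f1 by simp
  have f4: "exp (2*X) = V * M^2"
  proof -
    have e: "2*X = 2*(X - (of_nat k - 1) * \<eta> / 2) + 2 * (of_nat (k-1) * (\<eta>/2))"
      using k2 by (simp add: of_nat_diff field_simps)
    have "exp (2*X) = V * exp (2 * (of_nat (k-1) * (\<eta>/2)))" unfolding V_def by (subst e) (rule exp_add)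
    also have "exp (2 * (of_nat (k-1) * (\<eta>/2))) = M^2"
      unfolding M_def T_def by (simp only: exp_num_mult exp_of_nat_mult)
    finally show ?thesis .
  qed
  have xb0: "\<forall>r<k-1. (\<lambda>r. 0 - of_nat r * \<eta>) r = 0 - of_nat r * \<eta>" by simp
  have P1: "(\<Prod>j<k-1. g (of_nat (Suc j) * \<eta>) T 1) * (T^2 - 1) = inverse T ^ (k-1) * ((T*M)^2 - 1)"
  proof -
    have nz1: "\<forall>r<k-1. exp (\<eta> - (0 - of_nat r * \<eta>)) \<noteq> 1"
    proof (intro allI impI)
      fix r assume "r < k-1"
      have "\<eta> - (0 - of_nat r * \<eta>) = of_int (int r + 1) * \<eta>" by (simp add: algebra_simps)
      then show "exp (\<eta> - (0 - of_nat r * \<eta>)) \<noteq> 1" using exp_int_ne1[OF hq hk, of "int r + 1"] by simp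
    qed
    have t: "(\<Prod>r<k-1. g (\<eta> - (0 - of_nat r * \<eta>)) (exp (\<eta>/2)) 1) * (exp (\<eta> - 0) - 1)
       = inverse (exp (\<eta>/2)) ^ (k-1) * (exp (\<eta> - 0 + of_nat (k-1) * \<eta>) - 1)"
      by (rule TP1[OF xb0 nz1])
    have a: "(\<Prod>r<k-1. g (\<eta> - (0 - of_nat r * \<eta>)) (exp (\<eta>/2)) 1) = (\<Prod>j<k-1. g (of_nat (Suc j) * \<eta>) T 1)"
      unfolding T_def by (rule prod.cong) (simp_all add: algebra_simps)
    have b: "exp (\<eta> - 0 + of_nat (k-1) * \<eta>) = (T*M)^2"
    proof -
      have e: "\<eta> - 0 + of_nat (k-1) * \<eta> = hb/2 + hb/2" using k2 by (simp add: hk of_nat_diff field_simps)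
      show ?thesis by (subst e, simp only: exp_add f2 power2_eq_square)
    qed
    show ?thesis using t[unfolded a b] by (simp add: f1 T_def)
  qed
  have P2: "(\<Prod>j<k-1. g (2*X - of_nat (Suc j) * \<eta>) T 1) * (V - 1) = inverse T ^ (k-1) * (V * M^2 - 1)"
  proof -
    have nz2: "\<forall>r<k-1. exp ((2*X - \<eta>) + (0 - of_nat r * \<eta>)) \<noteq> 1"
    proof (intro allI impI)
      fix r assume "r < k-1"
      then show "exp ((2*X - \<eta>) + (0 - of_nat r * \<eta>)) \<noteq> 1" using nz by (auto simp: algebra_simps)
    qed
    have t: "(\<Prod>r<k-1. g ((2*X - \<eta>) + (0 - of_nat r * \<eta>)) (exp (\<eta>/2)) 1) * (exp ((2*X - \<eta>) + 0 - (of_nat (k-1) - 1) * \<eta>) - 1)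
       = inverse (exp (\<eta>/2)) ^ (k-1) * (exp ((2*X - \<eta>) + 0 - (of_nat (k-1) - 1) * \<eta> + of_nat (k-1) * \<eta>) - 1)"
      by (rule TP2[OF xb0 nz2])
    have a: "(\<Prod>r<k-1. g ((2*X - \<eta>) + (0 - of_nat r * \<eta>)) (exp (\<eta>/2)) 1) = (\<Prod>j<k-1. g (2*X - of_nat (Suc j) * \<eta>) T 1)"
      unfolding T_def by (rule prod.cong) (simp_all add: algebra_simps)
    have b: "(2*X - \<eta>) + 0 - (of_nat (k-1) - 1) * \<eta> = 2*(X - (of_nat k - 1) * \<eta> / 2)"
      using k2 by (simp add: of_nat_diff field_simps)
    have c: "2*(X - (of_nat k - 1) * \<eta> / 2) + of_nat (k-1) * \<eta> = 2*X" using k2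
      by (simp add: field_simps)
    show ?thesis using t[unfolded b c a V_def[symmetric] f4] unfolding T_def by simp
  qed
  have iM: "inverse T ^ (k-1) = inverse M" unfolding M_def by (simp add: power_inverse)
  have T1: "T^2 - 1 \<noteq> 0" using T21 by simp
  have Vn1: "V - 1 \<noteq> 0" using V1 V_def by simp
  have VM: "1 - V * M^2 \<noteq> 0" using U1 f4 by simp
  have U2': "1 - inverse (T*M)^2 * (V * M^2) \<noteq> 0" using U2 f2 f4 by simp
  have V2': "1 - inverse T ^ 2 * V \<noteq> 0" using V2 V_def T_def by simp
  have p1: "(\<Prod>j<k-1. g (of_nat (Suc j) * \<eta>) T 1) = inverse M * ((T*M)^2 - 1) / (T^2 - 1)"
    using solve_div[OF P1[unfolded iM] T1] by simp
  have p2: "(\<Prod>j<k-1. g (2*X - of_nat (Suc j) * \<eta>) T 1) = inverse M * (V * M^2 - 1) / (V - 1)"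
    using solve_div[OF P2[unfolded iM] Vn1] by simp
  have lhs: "(\<Prod>j<k-1. g (of_nat (Suc j) * \<eta>) T 1 * g (2*X - of_nat (Suc j) * \<eta>) T 1)
     = inverse M * ((T*M)^2 - 1) / (T^2 - 1) * (inverse M * (V * M^2 - 1) / (V - 1))"
    unfolding prod.distrib p1 p2 ..
  have T2': "1 - inverse T ^ 2 \<noteq> 0" using T21 T0 by (simp add: field_simps)
  have s1: "1 - inverse (T*M)^2 * (V * M^2) = 1 - inverse T ^ 2 * V"
    using M0 by (simp add: field_simps)
  have s2: "(1 - inverse (T*M)^2) / (1 - inverse T ^ 2) = inverse M ^ 2 * ((T*M)^2 - 1) / (T^2 - 1)"
  proof -
    have a2: "(1 - inverse (t2*m2)) / (1 - inverse t2) = inverse m2 * (t2*m2 - 1) / (t2 - 1)"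
      if "t2 \<noteq> 0" "m2 \<noteq> 0" "t2 - 1 \<noteq> 0" for t2 m2 :: complex
    proof -
      have "1 - inverse t2 = (t2 - 1) / t2" using that by (simp add: field_simps)
      moreover have "1 - inverse (t2*m2) = (t2*m2 - 1) / (t2*m2)" using that by (simp add: field_simps)
      ultimately show ?thesis using that by (simp add: field_simps)
    qed
    show ?thesis using a2[of "T^2" "M^2"] T0 M0 T1 by (simp add: power_mult_distrib power_inverse)
  qed
  have alg: "a*R/D * (a*(W-1)/(V-1)) / (A*(1-W)) = (a^2 * R / D) / (A*(1-V))"
    if "D \<noteq> 0" "V - 1 \<noteq> 0" "1 - W \<noteq> 0" "A \<noteq> 0" for a R D W V A :: complex
  proof -
    have b: "a*R/D * (a * (- ww) / (- vv)) / (A * ww) = (a^2 * R / D) / (A * vv)"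
      if "D \<noteq> 0" "vv \<noteq> 0" "ww \<noteq> 0" "A \<noteq> 0" for ww vv :: complex
      using that by (simp add: field_simps power2_eq_square)
    have "W - 1 = - (1 - W)" "V - 1 = - (1 - V)" by simp_all
    moreover have "1 - V \<noteq> 0" using that by simp
    ultimately show ?thesis using b[of "1 - V" "1 - W"] that by simp
  qed
  show ?thesis
    unfolding T_def[symmetric] V_def[symmetric] f2 f4
    unfolding lhs s1 s2
    by (rule alg) (use T1 Vn1 VM V2' in auto)
qed


lemma blk_img: fixes N1 m k :: nat shows "{N1 + m*k + 1 .. N1 + m*k + k} = (\<lambda>r. N1 + k*m + r + 1) ` {..<k}"
proof (rule set_eqI, rule iffI)
  fix x assume "x \<in> {N1 + m*k + 1 .. N1 + m*k + k}"
  then have "x = N1 + k*m + (x - N1 - m*k - 1) + 1" "x - N1 - m*k - 1 < k"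
    by (auto simp: mult.commute)
  then show "x \<in> (\<lambda>r. N1 + k*m + r + 1) ` {..<k}" by blast
qed (auto simp: mult.commute)

lemma prod_blocks:
  fixes F :: "nat \<Rightarrow> 'a::comm_monoid_mult"
  shows "(\<Prod>j\<in>{1..N1 + m*k}. F j) = (\<Prod>j\<in>{1..N1}. F j) * (\<Prod>L<m. \<Prod>r<k. F (N1 + k*L + r + 1))"
proof (induction m)
  case 0
  then show ?case by simp
next
  case (Suc m)
  have un: "{1..N1 + Suc m * k} = {1..N1 + m*k} \<union> {N1 + m*k + 1 .. N1 + m*k + k}" by auto
  have "(\<Prod>j\<in>{1..N1 + Suc m * k}. F j) = (\<Prod>j\<in>{1..N1 + m*k}. F j) * (\<Prod>j\<in>{N1 + m*k + 1 .. N1 + m*k + k}. F j)"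
    unfolding un by (rule prod.union_disjoint) auto
  also have "(\<Prod>j\<in>{N1 + m*k + 1 .. N1 + m*k + k}. F j) = (\<Prod>r<k. F (N1 + k*m + r + 1))"
    unfolding blk_img by (subst prod.reindex) (auto simp: inj_on_def)
  finally show ?case using Suc by (simp add: mult.assoc)
qed

lemma sum_blocks:
  fixes F :: "nat \<Rightarrow> 'a::comm_monoid_add"
  shows "(\<Sum>j\<in>{1..N1 + m*k}. F j) = (\<Sum>j\<in>{1..N1}. F j) + (\<Sum>L<m. \<Sum>r<k. F (N1 + k*L + r + 1))"
proof (induction m)
  case 0
  then show ?case by simp
next
  case (Suc m)
  have un: "{1..N1 + Suc m * k} = {1..N1 + m*k} \<union> {N1 + m*k + 1 .. N1 + m*k + k}" by auto
  have "(\<Sum>j\<in>{1..N1 + Suc m * k}. F j) = (\<Sum>j\<in>{1..N1 + m*k}. F j) + (\<Sum>j\<in>{N1 + m*k + 1 .. N1 + m*k + k}. F j)"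
    unfolding un by (rule sum.union_disjoint) auto
  also have "(\<Sum>j\<in>{N1 + m*k + 1 .. N1 + m*k + k}. F j) = (\<Sum>r<k. F (N1 + k*m + r + 1))"
    unfolding blk_img by (subst sum.reindex) (auto simp: inj_on_def)
  finally show ?case using Suc by (simp add: add.assoc)
qed

lemma blk_inj:
  fixes r k r' L L' N1 :: nat
  assumes "r < k" "r' < k" "N1 + k*L + r + 1 = N1 + k*L' + r' + 1"
  shows "L = L' \<and> r = r'"
proof -
  have e: "k*L + r = k*L' + r'" using assms by simp
  have "(k*L + r) div k = L" using assms(1) by simp
  moreover have "(k*L' + r') div k = L'" using assms(2) by simp
  ultimately have "L = L'" using e by metis
  then show ?thesis using e by simp
qed

lemma blk_range:
  fixes r k m L N1 :: nat
  assumes "L < m" "r < k"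
  shows "N1 < N1 + k*L + r + 1" "N1 + k*L + r + 1 \<le> N1 + m*k"
proof -
  show "N1 < N1 + k*L + r + 1" by simp
  have "k*L + r + 1 \<le> k*L + k" using assms by simp
  also have "\<dots> = k * Suc L" by simp
  also have "\<dots> \<le> k * m" using assms(1) by (intro mult_le_mono2) simp
  finally show "N1 + k*L + r + 1 \<le> N1 + m*k" by (simp add: mult.commute)
qed

lemma simple_root_inj: "simple_root p = simple_root p' \<Longrightarrow> p = p'"
proof (rule ccontr)
  assume e: "simple_root p = simple_root p'" and ne: "p \<noteq> p'"
  have "simple_root p p = simple_root p' p" using e by simp
  then show False using ne by (auto simp: simple_root_def split: if_splits)
qed

lemma S0_mem:
  "simple_root p \<in> S0_blocks N1 k m \<longleftrightarrow> (\<exists>L<m. \<exists>r. Suc r < k \<and> p = N1 + k*L + r + 1)"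
proof
  assume "simple_root p \<in> S0_blocks N1 k m"
  then obtain l j where lj: "simple_root p = simple_root (N1 + k*(l-1) + j)" "l \<in> {1..m}" "j \<in> {1..k-1}"
    unfolding S0_blocks_def by blast
  then have "p = N1 + k*(l-1) + (j-1) + 1" using simple_root_inj by fastforce
  moreover have "l - 1 < m" "Suc (j-1) < k" using lj by auto
  ultimately show "\<exists>L<m. \<exists>r. Suc r < k \<and> p = N1 + k*L + r + 1" by blast
next
  assume "\<exists>L<m. \<exists>r. Suc r < k \<and> p = N1 + k*L + r + 1"
  then obtain L r where "L < m" "Suc r < k" "p = N1 + k*L + r + 1" by blast
  then have "simple_root p = simple_root (N1 + k*(Suc L - 1) + Suc r)" "Suc L \<in> {1..m}" "Suc r \<in> {1..k-1}"
    by auto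
  then show "simple_root p \<in> S0_blocks N1 k m" unfolding S0_blocks_def by blast
qed

lemma D0_blk:
  assumes x: "x \<in> D0 n (S0_blocks N1 k m) \<eta>" and L: "L < m" and r: "r < k"
  shows "x (N1 + k*L + r + 1) = x (N1 + k*L + 1) - of_nat r * \<eta>"
  using r
proof (induction r)
  case 0
  then show ?case by simp
next
  case (Suc r)
  have "simple_root (N1 + k*L + r + 1) \<in> S0_blocks N1 k m"
    using S0_mem[of "N1 + k*L + r + 1" N1 k m] L Suc.prems by blast
  then have "x (N1 + k*L + r + 1) - x (Suc (N1 + k*L + r + 1)) = \<eta>"
    using x unfolding D0_def by blast
  then show ?case using Suc by (simp add: algebra_simps)
qed

lemma sum_of_nat_lt: "(\<Sum>r<k. (of_nat r :: complex)) = of_nat k * (of_nat k - 1) / 2"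
  by (induction k) (simp_all add: field_simps)

lemma coordmap_x:
  assumes "1 \<le> i" "i \<le> N1" shows "coordmap N1 k m x i = x i"
  using assms by (simp add: coordmap_def)

lemma coordmap_y:
  assumes x: "x \<in> D0 n (S0_blocks N1 k m) \<eta>" and L: "L < m" and k: "k \<ge> 1"
  shows "coordmap N1 k m x (N1 + Suc L) = x (N1 + k*L + 1) - (of_nat k - 1) * \<eta> / 2"
proof -
  have "coordmap N1 k m x (N1 + Suc L) = (1 / of_nat k) * (\<Sum>s<k. x (N1 + k * Suc L - s))"
    using L by (simp add: coordmap_def)
  also have "(\<Sum>s<k. x (N1 + k * Suc L - s)) = (\<Sum>s<k. x (N1 + k*L + (k - Suc s) + 1))"
  proof (rule sum.cong)
    fix s assume "s \<in> {..<k}"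
    then have "N1 + k * Suc L - s = N1 + k*L + (k - Suc s) + 1" by simp
    then show "x (N1 + k * Suc L - s) = x (N1 + k*L + (k - Suc s) + 1)" by simp
  qed simp
  also have "\<dots> = (\<Sum>r<k. x (N1 + k*L + r + 1))"
    by (rule sum.nat_diff_reindex)
  also have "\<dots> = (\<Sum>r<k. x (N1 + k*L + 1) - of_nat r * \<eta>)"
    by (rule sum.cong[OF refl], rule D0_blk[OF x L], simp)
  also have "\<dots> = of_nat k * x (N1 + k*L + 1) - \<eta> * (of_nat k * (of_nat k - 1) / 2)"
    by (simp add: sum_subtractf sum_distrib_left[symmetric] mult.commute sum_of_nat_lt)
  also have "(1 / of_nat k) * (of_nat k * x (N1 + k*L + 1) - \<eta> * (of_nat k * (of_nat k - 1) / 2))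
     = x (N1 + k*L + 1) - (of_nat k - 1) * \<eta> / 2"
  proof -
    have kn: "(of_nat k :: complex) \<noteq> 0" using k by simp
    then show ?thesis by (simp add: field_simps)
  qed
  finally show ?thesis .
qed


lemma prod_minus_if:
  fixes F :: "nat \<Rightarrow> 'a::comm_monoid_mult"
  assumes "finite A"
  shows "(\<Prod>j\<in>A - {i}. F j) = (\<Prod>j\<in>A. if j = i then 1 else F j)"
proof -
  have "(\<Prod>j\<in>A. if j = i then 1 else F j) = (\<Prod>j\<in>A \<inter> {j. j = i}. 1) * (\<Prod>j\<in>A \<inter> - {j. j = i}. F j)"
    by (rule prod.If_cases) (rule assms)
  also have "A \<inter> - {j. j = i} = A - {i}" by auto
  finally show ?thesis by simp
qed

lemma gden1: "gden z 1 = exp z - 1" by (simp add: gden_def)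

lemma Suc_img: "{1..m} = Suc ` {..<m}" by (simp add: image_Suc_lessThan)

lemma prod_1m: "(\<Prod>l\<in>{1..m}. F l) = (\<Prod>L<m. F (Suc L))"
  unfolding Suc_img by (subst prod.reindex) auto

lemma sum_1m: "(\<Sum>l\<in>{1..m}. F l) = (\<Sum>L<m. F (Suc L))"
  unfolding Suc_img by (subst sum.reindex) auto

lemma kreg_D:
  assumes kr: "koorn_regular n hb x" and i: "i \<in> {1..n}" and \<epsilon>: "\<epsilon> \<in> {1, -1::real}"
  shows "\<forall>j\<in>{1..n} - {i}. exp (complex_of_real \<epsilon> * x i - x j) \<noteq> 1 \<and> exp (complex_of_real \<epsilon> * x i + x j) \<noteq> 1"
    and "1 - (inverse (exp (hb/2)))^2 * exp (2 * (complex_of_real \<epsilon> * x i)) \<noteq> 0"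
    and "1 - exp (2 * (complex_of_real \<epsilon> * x i)) \<noteq> 0"
proof -
  have a: "2 * complex_of_real \<epsilon> * x i = 2 * (complex_of_real \<epsilon> * x i)" by (rule mult.assoc)
  note h = kr[unfolded koorn_regular_def Let_def, rule_format, OF i \<epsilon>, unfolded a gden1]
  show "\<forall>j\<in>{1..n} - {i}. exp (complex_of_real \<epsilon> * x i - x j) \<noteq> 1 \<and> exp (complex_of_real \<epsilon> * x i + x j) \<noteq> 1"
    using h by simp
  show "1 - (inverse (exp (hb/2)))^2 * exp (2 * (complex_of_real \<epsilon> * x i)) \<noteq> 0"
    using h by blast
  show "1 - exp (2 * (complex_of_real \<epsilon> * x i)) \<noteq> 0"
    using h by blast
qed

lemma greg_B:
  assumes gr: "gk_regular N1 m hb \<xi> z" and l: "l \<in> {1..m}" and \<epsilon>: "\<epsilon> \<in> {1, -1::real}"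
  shows "1 - (inverse (exp (\<xi>/2)))^2 * exp (2 * (complex_of_real \<epsilon> * z (N1 + l))) \<noteq> 0"
    and "1 - exp (2 * (complex_of_real \<epsilon> * z (N1 + l))) \<noteq> 0"
proof -
  note h0 = conjunct2[OF gr[unfolded gk_regular_def Let_def], rule_format, OF l \<epsilon>]
  have h: "1 - (inverse (exp (\<xi>/2)))^2 * exp (2 * complex_of_real \<epsilon> * z (N1 + l)) \<noteq> 0 \<and>
     1 - exp (2 * complex_of_real \<epsilon> * z (N1 + l)) \<noteq> 0" using h0 by blast
  have a: "2 * complex_of_real \<epsilon> * z (N1 + l) = 2 * (complex_of_real \<epsilon> * z (N1 + l))" by (rule mult.assoc)
  show "1 - (inverse (exp (\<xi>/2)))^2 * exp (2 * (complex_of_real \<epsilon> * z (N1 + l))) \<noteq> 0"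
    using h unfolding a by blast
  show "1 - exp (2 * (complex_of_real \<epsilon> * z (N1 + l))) \<noteq> 0"
    using h unfolding a by blast
qed

context
  fixes k m N1 n :: nat and \<eta> hb t1 :: complex
  assumes k2: "k \<ge> 2" and nk: "n = N1 + m * k"
    and hk: "hb = of_nat k * \<eta>"
    and hq: "\<forall>r\<in>(\<rat>::real set). hb \<noteq> \<i> * complex_of_real (pi * r)"
    and t1: "t1 = exp (\<eta> / 2)"
begin

lemma IDA:
  fixes t0 tn u0 un :: complex and x :: "nat \<Rightarrow> complex" and i :: nat and \<epsilon> :: real
  assumes x: "x \<in> D0 n (S0_blocks N1 k m) \<eta>"
    and kr: "koorn_regular n hb x"
    and i: "i \<in> {1..N1}" and \<epsilon>: "\<epsilon> \<in> {1, -1}"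
  shows "koorn_C n hb t0 t1 tn u0 un i \<epsilon> x = inverse (t0 * tn) *
     gk_A N1 m hb \<eta> (t0 * u0 * inverse (exp (hb / 2))) (- (t0 * inverse u0 * inverse (exp (hb / 2))))
              (tn * un) (- (tn * inverse un)) i \<epsilon> (coordmap N1 k m x)"
proof -
  define e where "e = complex_of_real \<epsilon>"
  define u where "u = e * x i"
  define z where "z = coordmap N1 k m x"
  define F where "F j = g (u - x j) t1 1 * g (u + x j) t1 1" for j
  have iN: "i \<in> {1..n}" using i nk by auto
  have reg: "\<forall>j\<in>{1..n} - {i}. exp (u - x j) \<noteq> 1 \<and> exp (u + x j) \<noteq> 1"
    using kreg_D(1)[OF kr iN \<epsilon>] unfolding u_def e_def .
  have zi: "z j = x j" if "j \<in> {1..N1}" for j using that by (simp add: z_def coordmap_def)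
  have k1: "k \<ge> 1" using k2 by simp
  have P: "(\<Prod>j\<in>{1..n} - {i}. F j) = (\<Prod>j\<in>{1..N1} - {i}. F j) * (\<Prod>L<m. \<Prod>r<k. F (N1 + k*L + r + 1))"
  proof -
    have "(\<Prod>j\<in>{1..n} - {i}. F j) = (\<Prod>j\<in>{1..n}. if j = i then 1 else F j)"
      by (rule prod_minus_if) simp
    also have "\<dots> = (\<Prod>j\<in>{1..N1}. if j = i then 1 else F j) *
        (\<Prod>L<m. \<Prod>r<k. if N1 + k*L + r + 1 = i then 1 else F (N1 + k*L + r + 1))"
      unfolding nk by (rule prod_blocks)
    also have "(\<Prod>j\<in>{1..N1}. if j = i then 1 else F j) = (\<Prod>j\<in>{1..N1} - {i}. F j)"
      by (rule prod_minus_if[symmetric]) simp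
    also have "(\<Prod>L<m. \<Prod>r<k. if N1 + k*L + r + 1 = i then 1 else F (N1 + k*L + r + 1))
        = (\<Prod>L<m. \<Prod>r<k. F (N1 + k*L + r + 1))"
      using i by (intro prod.cong refl) auto
    finally show ?thesis .
  qed
  have B: "(\<Prod>r<k. F (N1 + k*L + r + 1)) =
      g (e * z i - z (N1 + Suc L)) (exp (hb/4) * exp (\<eta>/4)) (inverse (exp (hb/4)) * exp (\<eta>/4)) *
      g (e * z i + z (N1 + Suc L)) (exp (hb/4) * exp (\<eta>/4)) (inverse (exp (hb/4)) * exp (\<eta>/4))"
    if L: "L < m" for L
  proof -
    have xb: "\<forall>r<k. x (N1 + k*L + r + 1) = x (N1 + k*L + 1) - of_nat r * \<eta>"
      using D0_blk[OF x L] by blast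
    have inb: "N1 + k*L + r + 1 \<in> {1..n} - {i}" if "r < k" for r
      using blk_range[OF L that, of N1] i nk by auto
    have nz1: "\<forall>r<k. exp (u - x (N1 + k*L + r + 1)) \<noteq> 1" using reg inb by blast
    have nz2: "\<forall>r<k. exp (u + x (N1 + k*L + r + 1)) \<noteq> 1" using reg inb by blast
    have "(\<Prod>r<k. F (N1 + k*L + r + 1)) =
      g (u - (x (N1 + k*L + 1) - (of_nat k - 1) * \<eta> / 2)) (exp (hb/4) * exp (\<eta>/4)) (inverse (exp (hb/4)) * exp (\<eta>/4)) *
      g (u + (x (N1 + k*L + 1) - (of_nat k - 1) * \<eta> / 2)) (exp (hb/4) * exp (\<eta>/4)) (inverse (exp (hb/4)) * exp (\<eta>/4))"
      unfolding F_def t1 by (rule BPu[OF hk k1 xb nz1 nz2])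
    also have "x (N1 + k*L + 1) - (of_nat k - 1) * \<eta> / 2 = z (N1 + Suc L)"
      unfolding z_def by (rule coordmap_y[OF x L k1, symmetric])
    finally show ?thesis using zi[OF i] u_def by simp
  qed
  have P1: "(\<Prod>j\<in>{1..N1} - {i}. F j) = (\<Prod>j\<in>{1..N1} - {i}. g (u - z j) (exp (\<eta>/2)) 1 * g (u + z j) (exp (\<eta>/2)) 1)"
    by (rule prod.cong) (auto simp: F_def zi t1)
  have P2: "(\<Prod>L<m. \<Prod>r<k. F (N1 + k*L + r + 1)) = (\<Prod>l\<in>{1..m}.
      g (u - z (N1 + l)) (exp (hb/4) * exp (\<eta>/4)) (inverse (exp (hb/4)) * exp (\<eta>/4)) *
      g (u + z (N1 + l)) (exp (hb/4) * exp (\<eta>/4)) (inverse (exp (hb/4)) * exp (\<eta>/4)))"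
    unfolding prod_1m using B zi[OF i] u_def by simp
  show ?thesis
    unfolding koorn_C_def gk_A_def Let_def e_def[symmetric] z_def[symmetric]
    unfolding zi[OF i]
    unfolding u_def[symmetric]
    unfolding F_def[symmetric]
    unfolding P P1 P2
    by (simp add: algebra_simps)
qed


lemma LF: "exp (hb/2) * inverse (exp (\<eta>/2)) * exp (X - (of_nat k - 1) * \<eta> / 2) = exp X"
proof -
  have e: "hb/2 - \<eta>/2 + (X - (of_nat k - 1) * \<eta> / 2) = X" by (simp add: hk field_simps)
  have "exp (hb/2) * inverse (exp (\<eta>/2)) * exp (X - (of_nat k - 1) * \<eta> / 2)
      = exp (hb/2 - \<eta>/2 + (X - (of_nat k - 1) * \<eta> / 2))"
    by (simp only: exp_add exp_diff divide_inverse)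
  also have "\<dots> = exp X" by (simp only: e)
  finally show ?thesis .
qed

lemma SPEC:
  fixes t0 tn u0 un :: complex and x :: "nat \<Rightarrow> complex" and \<epsilon> :: real and L r0 :: nat and X :: complex
  assumes x: "x \<in> D0 n (S0_blocks N1 k m) \<eta>"
    and kr: "koorn_regular n hb x"
    and gr: "gk_regular N1 m hb \<eta> (coordmap N1 k m x)"
    and L: "L < m" and r0: "r0 < k" and \<epsilon>: "\<epsilon> \<in> {1, -1}"
    and Xdef: "X = complex_of_real \<epsilon> * x (N1 + k*L + r0 + 1)"
    and own: "(\<Prod>r<k. if r = r0 then 1 else g (X - x (N1 + k*L + r + 1)) t1 1 * g (X + x (N1 + k*L + r + 1)) t1 1)
            = (\<Prod>j<k-1. g (of_nat (Suc j) * \<eta>) (exp (\<eta>/2)) 1 * g (2*X - of_nat (Suc j) * \<eta>) (exp (\<eta>/2)) 1)"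
    and ownnz: "\<forall>j<k-1. exp (2*X - of_nat (Suc j) * \<eta>) \<noteq> 1"
    and eY: "complex_of_real \<epsilon> * coordmap N1 k m x (N1 + Suc L) = X - (of_nat k - 1) * \<eta> / 2"
  shows "koorn_C n hb t0 t1 tn u0 un (N1 + k*L + r0 + 1) \<epsilon> x = inverse (t0 * tn) *
     ((1 - (inverse (exp (hb / 2)))^2) / (1 - (inverse (exp (\<eta> / 2)))^2) *
     gk_B N1 m hb \<eta> (t0 * u0 * inverse (exp (hb / 2))) (- (t0 * inverse u0 * inverse (exp (hb / 2))))
              (tn * un) (- (tn * inverse un)) (Suc L) \<epsilon> (coordmap N1 k m x))"
proof -
  define p where "p = N1 + k*L + r0 + 1"
  define e where "e = complex_of_real \<epsilon>"
  define z where "z = coordmap N1 k m x"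
  define Y where "Y = X - (of_nat k - 1) * \<eta> / 2"
  define F where "F j = g (X - x j) t1 1 * g (X + x j) t1 1" for j
  define H where "H L' = (\<Prod>r<k. if N1 + k*L' + r + 1 = p then 1 else F (N1 + k*L' + r + 1))" for L'
  have k1: "k \<ge> 1" using k2 by simp
  have pn: "p \<in> {1..n}" using blk_range[OF L r0, of N1] nk p_def by auto
  have pN1: "N1 < p" using p_def by simp
  have reg: "\<forall>j\<in>{1..n} - {p}. exp (X - x j) \<noteq> 1 \<and> exp (X + x j) \<noteq> 1"
    using kreg_D(1)[OF kr pn \<epsilon>] unfolding Xdef p_def .
  have U: "1 - (inverse (exp (hb/2)))^2 * exp (2*X) \<noteq> 0 \<and> 1 - exp (2*X) \<noteq> 0"
    using kreg_D(2,3)[OF kr pn \<epsilon>] unfolding Xdef p_def by blast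
  have Ln: "Suc L \<in> {1..m}" using L by simp
  have V: "1 - (inverse (exp (\<eta>/2)))^2 * exp (2*Y) \<noteq> 0 \<and> 1 - exp (2*Y) \<noteq> 0"
    using greg_B[OF gr Ln \<epsilon>] unfolding eY Y_def by blast
  have zi: "z j = x j" if "j \<in> {1..N1}" for j using that by (simp add: z_def coordmap_def)
  have P: "(\<Prod>j\<in>{1..n} - {p}. F j) = (\<Prod>j\<in>{1..N1}. F j) * (H L * (\<Prod>L'\<in>{..<m} - {L}. H L'))"
  proof -
    have "(\<Prod>j\<in>{1..n} - {p}. F j) = (\<Prod>j\<in>{1..n}. if j = p then 1 else F j)"
      by (rule prod_minus_if) simp
    also have "\<dots> = (\<Prod>j\<in>{1..N1}. if j = p then 1 else F j) * (\<Prod>L'<m. H L')"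
      unfolding nk H_def by (rule prod_blocks)
    also have "(\<Prod>j\<in>{1..N1}. if j = p then 1 else F j) = (\<Prod>j\<in>{1..N1}. F j)"
      using pN1 by (intro prod.cong refl) auto
    also have "(\<Prod>L'<m. H L') = H L * (\<Prod>L'\<in>{..<m} - {L}. H L')"
      using L by (subst prod.remove[of "{..<m}" L]) auto
    finally show ?thesis .
  qed
  have HL: "H L = (\<Prod>j<k-1. g (of_nat (Suc j) * \<eta>) (exp (\<eta>/2)) 1 * g (2*X - of_nat (Suc j) * \<eta>) (exp (\<eta>/2)) 1)"
  proof -
    have "H L = (\<Prod>r<k. if r = r0 then 1 else g (X - x (N1 + k*L + r + 1)) t1 1 * g (X + x (N1 + k*L + r + 1)) t1 1)"
      unfolding H_def F_def p_def
    proof (rule prod.cong[OF refl])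
      fix r assume "r \<in> {..<k}"
      then have "N1 + k*L + r + 1 = N1 + k*L + r0 + 1 \<longleftrightarrow> r = r0" using r0 blk_inj by blast
      then show "(if N1 + k*L + r + 1 = N1 + k*L + r0 + 1 then 1 else g (X - x (N1 + k*L + r + 1)) t1 1 * g (X + x (N1 + k*L + r + 1)) t1 1)
        = (if r = r0 then 1 else g (X - x (N1 + k*L + r + 1)) t1 1 * g (X + x (N1 + k*L + r + 1)) t1 1)" by simp
    qed
    then show ?thesis using own by simp
  qed
  have HO: "H L' = g (e * z (N1 + Suc L) - z (N1 + Suc L')) (exp (hb/2)) 1 * g (e * z (N1 + Suc L) + z (N1 + Suc L')) (exp (hb/2)) 1"
    if L': "L' \<in> {..<m} - {L}" for L'
  proof -
    have L'm: "L' < m" using L' by simp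
    have H': "H L' = (\<Prod>r<k. F (N1 + k*L' + r + 1))"
      unfolding H_def p_def
    proof (intro prod.cong refl)
      fix r assume "r \<in> {..<k}"
      then have "N1 + k*L' + r + 1 \<noteq> N1 + k*L + r0 + 1" using blk_inj[of r k r0 N1 L' L] r0 L' by auto
      then show "(if N1 + k*L' + r + 1 = N1 + k*L + r0 + 1 then 1 else F (N1 + k*L' + r + 1)) = F (N1 + k*L' + r + 1)"
        by simp
    qed
    have xb: "\<forall>r<k. x (N1 + k*L' + r + 1) = x (N1 + k*L' + 1) - of_nat r * \<eta>"
      using D0_blk[OF x L'm] by blast
    have inb: "N1 + k*L' + r + 1 \<in> {1..n} - {p}" if "r < k" for r
      using blk_range[OF L'm that, of N1] nk L' r0 that p_def blk_inj[of r k r0 N1 L' L] by auto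
    have nz1: "\<forall>r<k. exp (X - x (N1 + k*L' + r + 1)) \<noteq> 1" using reg inb by blast
    have nz2: "\<forall>r<k. exp (X + x (N1 + k*L' + r + 1)) \<noteq> 1" using reg inb by blast
    have HH: "H L' = g (X - x (N1 + k*L' + 1)) (exp (hb/2)) 1 * g (X + x (N1 + k*L' + 1) - (of_nat k - 1) * \<eta>) (exp (hb/2)) 1"
      unfolding H' F_def t1 by (rule BPX[OF hk k1 xb nz1 nz2])
    have y': "z (N1 + Suc L') = x (N1 + k*L' + 1) - (of_nat k - 1) * \<eta> / 2"
      unfolding z_def by (rule coordmap_y[OF x L'm k1])
    have ez: "e * z (N1 + Suc L) = X - (of_nat k - 1) * \<eta> / 2" using eY e_def z_def by simp
    have a1: "e * z (N1 + Suc L) - z (N1 + Suc L') = X - x (N1 + k*L' + 1)"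
      unfolding y' ez by (simp add: algebra_simps)
    have a2: "e * z (N1 + Suc L) + z (N1 + Suc L') = X + x (N1 + k*L' + 1) - (of_nat k - 1) * \<eta>"
      unfolding y' ez by (simp add: field_simps)
    show ?thesis unfolding a1 a2 HH ..
  qed
  have PO: "(\<Prod>L'\<in>{..<m} - {L}. H L') = (\<Prod>l'\<in>{1..m} - {Suc L}. g (e * z (N1 + Suc L) - z (N1 + l')) (exp (hb/2)) 1 * g (e * z (N1 + Suc L) + z (N1 + l')) (exp (hb/2)) 1)"
  proof -
    have img: "{1..m} - {Suc L} = Suc ` ({..<m} - {L})" by (simp add: image_set_diff image_Suc_lessThan)
    show ?thesis unfolding img by (subst prod.reindex) (auto simp: HO)
  qed
  have P1: "(\<Prod>j\<in>{1..N1}. F j) = (\<Prod>j\<in>{1..N1}. g (e * z (N1 + Suc L) - z j) (exp (hb/4) * exp (\<eta>/4)) (exp (hb/4) * inverse (exp (\<eta>/4))) *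
        g (e * z (N1 + Suc L) + z j) (exp (hb/4) * exp (\<eta>/4)) (exp (hb/4) * inverse (exp (\<eta>/4))))"
  proof (rule prod.cong[OF refl])
    fix j assume j: "j \<in> {1..N1}"
    have jn: "j \<in> {1..n} - {p}" using j pN1 nk by auto
    have e1: "exp (X - x j) \<noteq> 1" and e2: "exp (X + x j) \<noteq> 1" using reg jn by auto
    have ez: "e * z (N1 + Suc L) = X - (of_nat k - 1) * \<eta> / 2" using eY e_def z_def by simp
    have a1: "e * z (N1 + Suc L) - z j = (X - x j) - (of_nat k - 1) * \<eta> / 2" using ez zi[OF j] by (simp add: algebra_simps)
    have a2: "e * z (N1 + Suc L) + z j = (X + x j) - (of_nat k - 1) * \<eta> / 2" using ez zi[OF j] by (simp add: algebra_simps)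
    show "F j = g (e * z (N1 + Suc L) - z j) (exp (hb/4) * exp (\<eta>/4)) (exp (hb/4) * inverse (exp (\<eta>/4))) *
        g (e * z (N1 + Suc L) + z j) (exp (hb/4) * exp (\<eta>/4)) (exp (hb/4) * inverse (exp (\<eta>/4)))"
      unfolding a1 a2 F_def G2[OF hk e1] G2[OF hk e2] t1 ..
  qed
  have OW: "H L / ((1 - (inverse (exp (hb/2)))^2 * exp (2*X)) * (1 - exp (2*X)))
     = ((1 - (inverse (exp (hb/2)))^2) / (1 - (inverse (exp (\<eta>/2)))^2))
         / ((1 - (inverse (exp (\<eta>/2)))^2 * exp (2*Y)) * (1 - exp (2*Y)))"
    unfolding HL Y_def by (rule OWN[OF hk k2 hq ownnz]) (use U V Y_def in auto)
  have lin: "1 - A * exp (hb/2) * inverse (exp (\<eta>/2)) * exp Y = 1 - A * exp X" for A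
    using LF[of X] Y_def by (simp add: mult.assoc)
  have ez: "e * z (N1 + Suc L) = Y" using eY e_def z_def Y_def by simp
  have key: "a * (b * (h * c)) * l / D = a * (C * (b * c * l' / D'))" if "h / D = C / D'" "l = l'" for a b h c l l' D D' C :: complex
  proof -
    have "a * (b * (h * c)) * l / D = a * b * c * l * (h / D)" by (simp add: divide_inverse ac_simps)
    also have "\<dots> = a * (C * (b * c * l' / D'))" using that by (simp add: divide_inverse ac_simps)
    finally show ?thesis .
  qed
  have Xp: "e * x p = X" using Xdef e_def p_def by simp
  show ?thesis
    unfolding koorn_C_def gk_B_def Let_def
    unfolding e_def[symmetric] z_def[symmetric] p_def[symmetric]
    unfolding mult.assoc[of 2 e]
    unfolding Xp ez
    unfolding F_def[symmetric]
    unfolding P P1[unfolded ez] PO[unfolded ez] lin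
    apply (rule key)
    using OW by (simp_all add: mult.assoc)
qed

end


lemma koorn_C_zero:
  assumes j: "j \<in> {1..n} - {p}"
    and z: "g (complex_of_real \<epsilon> * x p - x j) t1 1 = 0 \<or> g (complex_of_real \<epsilon> * x p + x j) t1 1 = 0"
  shows "koorn_C n hb t0 t1 tn u0 un p \<epsilon> x = 0"
proof -
  have "(\<Prod>j\<in>{1..n} - {p}. g (complex_of_real \<epsilon> * x p - x j) t1 1 * g (complex_of_real \<epsilon> * x p + x j) t1 1) = 0"
    using j z by (subst prod_zero_iff) auto
  then show ?thesis unfolding koorn_C_def Let_def by simp
qed

context
  fixes k m N1 n :: nat and \<eta> hb t1 :: complex
  assumes k2: "k \<ge> 2" and nk: "n = N1 + m * k"
    and hk: "hb = of_nat k * \<eta>"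
    and hq: "\<forall>r\<in>(\<rat>::real set). hb \<noteq> \<i> * complex_of_real (pi * r)"
    and t1: "t1 = exp (\<eta> / 2)"
begin

lemma gzero: "g (- \<eta>) t1 1 = 0"
proof -
  have "exp \<eta> = exp (\<eta>/2) * exp (\<eta>/2)" by (simp add: mult_exp_exp)
  then have "t1 * exp (- \<eta>) - inverse t1 = 0" unfolding t1 by (simp add: exp_minus field_simps)
  then show ?thesis by (simp add: g_def)
qed

lemma IDB:
  fixes t0 tn u0 un :: complex and x :: "nat \<Rightarrow> complex" and \<epsilon> :: real and L :: nat
  assumes x: "x \<in> D0 n (S0_blocks N1 k m) \<eta>"
    and kr: "koorn_regular n hb x"
    and gr: "gk_regular N1 m hb \<eta> (coordmap N1 k m x)"
    and L: "L < m" and \<epsilon>: "\<epsilon> \<in> {1, -1}"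
  shows "(\<Sum>r<k. koorn_C n hb t0 t1 tn u0 un (N1 + k*L + r + 1) \<epsilon> x) = inverse (t0 * tn) *
     ((1 - (inverse (exp (hb / 2)))^2) / (1 - (inverse (exp (\<eta> / 2)))^2) *
     gk_B N1 m hb \<eta> (t0 * u0 * inverse (exp (hb / 2))) (- (t0 * inverse u0 * inverse (exp (hb / 2))))
              (tn * un) (- (tn * inverse un)) (Suc L) \<epsilon> (coordmap N1 k m x))"
proof -
  note spec = SPEC[OF k2 nk hk hq t1 x kr gr L]
  define f where "f = x (N1 + k*L + 1)"
  have k1: "k \<ge> 1" using k2 by simp
  have kk: "k = Suc (k-1)" using k2 by simp
  have xb: "x (N1 + k*L + r + 1) = f - of_nat r * \<eta>" if "r < k" for r
    unfolding f_def by (rule D0_blk[OF x L that])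
  have inb: "N1 + k*L + r + 1 \<in> {1..n}" if "r < k" for r
    using blk_range[OF L that, of N1] nk by auto
  have neq: "N1 + k*L + r + 1 \<noteq> N1 + k*L + r' + 1" if "r \<noteq> r'" for r r' using that by simp
  have cy: "coordmap N1 k m x (N1 + Suc L) = f - (of_nat k - 1) * \<eta> / 2"
    unfolding f_def by (rule coordmap_y[OF x L k1])
  have sum1: "(\<Sum>r<k. C r) = C r0" if "r0 < k" "\<And>r. r < k \<Longrightarrow> r \<noteq> r0 \<Longrightarrow> C r = 0" for C :: "nat \<Rightarrow> complex" and r0
  proof -
    have "(\<Sum>r<k. C r) = C r0 + (\<Sum>r\<in>{..<k} - {r0}. C r)" using that(1) by (subst sum.remove[of _ r0]) auto
    also have "(\<Sum>r\<in>{..<k} - {r0}. C r) = 0" using that(2) by (intro sum.neutral) auto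
    finally show ?thesis by simp
  qed
  consider "\<epsilon> = 1" | "\<epsilon> = -1" using \<epsilon> by blast
  then show ?thesis
  proof cases
    case 1
    define X where "X = f"
    have z: "(\<Sum>r<k. koorn_C n hb t0 t1 tn u0 un (N1 + k*L + r + 1) \<epsilon> x) = koorn_C n hb t0 t1 tn u0 un (N1 + k*L + 0 + 1) \<epsilon> x"
    proof (rule sum1)
      fix r assume r: "r < k" "r \<noteq> 0"
      then obtain r' where r': "r = Suc r'" by (cases r) auto
      show "koorn_C n hb t0 t1 tn u0 un (N1 + k*L + r + 1) \<epsilon> x = 0"
      proof (rule koorn_C_zero)
        show "N1 + k*L + r' + 1 \<in> {1..n} - {N1 + k*L + r + 1}" using inb[of r'] r r' by auto
        have "x (N1 + k*L + r + 1) - x (N1 + k*L + r' + 1) = - \<eta>"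
        proof -
          have r'k: "r' < k" using r r' by simp
          show ?thesis unfolding xb[OF r(1)] xb[OF r'k] using r' by (simp add: algebra_simps)
        qed
        then show "g (complex_of_real \<epsilon> * x (N1 + k*L + r + 1) - x (N1 + k*L + r' + 1)) t1 1 = 0 \<or>
                   g (complex_of_real \<epsilon> * x (N1 + k*L + r + 1) + x (N1 + k*L + r' + 1)) t1 1 = 0"
          using 1 gzero by simp
      qed
    qed (use k1 in simp)
    have Xd: "X = complex_of_real \<epsilon> * x (N1 + k*L + 0 + 1)" using 1 X_def f_def by simp
    have reg: "\<forall>j\<in>{1..n} - {N1 + k*L + 0 + 1}. exp (X - x j) \<noteq> 1 \<and> exp (X + x j) \<noteq> 1"
      using kreg_D(1)[OF kr inb[of 0] \<epsilon>, unfolded Xd[symmetric]] k1 by simp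
    have own: "(\<Prod>r<k. if r = 0 then 1 else g (X - x (N1 + k*L + r + 1)) t1 1 * g (X + x (N1 + k*L + r + 1)) t1 1)
            = (\<Prod>j<k-1. g (of_nat (Suc j) * \<eta>) (exp (\<eta>/2)) 1 * g (2*X - of_nat (Suc j) * \<eta>) (exp (\<eta>/2)) 1)"
    proof -
      have "(\<Prod>r<k. if r = 0 then 1 else g (X - x (N1 + k*L + r + 1)) t1 1 * g (X + x (N1 + k*L + r + 1)) t1 1)
         = (\<Prod>j<k-1. g (X - x (N1 + k*L + Suc j + 1)) t1 1 * g (X + x (N1 + k*L + Suc j + 1)) t1 1)"
        by (subst kk, subst prod.lessThan_Suc_shift) simp
      also have "\<dots> = (\<Prod>j<k-1. g (of_nat (Suc j) * \<eta>) (exp (\<eta>/2)) 1 * g (2*X - of_nat (Suc j) * \<eta>) (exp (\<eta>/2)) 1)"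
      proof (rule prod.cong[OF refl])
        fix j assume "j \<in> {..<k-1}"
        then have xj: "x (N1 + k*L + Suc j + 1) = X - of_nat (Suc j) * \<eta>" using xb[of "Suc j"] X_def by simp
        have a1: "X - x (N1 + k*L + Suc j + 1) = of_nat (Suc j) * \<eta>" unfolding xj by simp
        have a2: "X + x (N1 + k*L + Suc j + 1) = 2*X - of_nat (Suc j) * \<eta>" unfolding xj by simp
        show "g (X - x (N1 + k*L + Suc j + 1)) t1 1 * g (X + x (N1 + k*L + Suc j + 1)) t1 1 =
           g (of_nat (Suc j) * \<eta>) (exp (\<eta>/2)) 1 * g (2*X - of_nat (Suc j) * \<eta>) (exp (\<eta>/2)) 1"
          unfolding a1 a2 t1 ..
      qed
      finally show ?thesis .
    qed
    have ownnz: "\<forall>j<k-1. exp (2*X - of_nat (Suc j) * \<eta>) \<noteq> 1"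
    proof (intro allI impI)
      fix j assume j: "j < k-1"
      then have xj: "x (N1 + k*L + Suc j + 1) = X - of_nat (Suc j) * \<eta>" using xb[of "Suc j"] X_def by simp
      have "N1 + k*L + Suc j + 1 \<in> {1..n} - {N1 + k*L + 0 + 1}" using inb[of "Suc j"] j by auto
      then have "exp (X + x (N1 + k*L + Suc j + 1)) \<noteq> 1" using reg by blast
      then show "exp (2*X - of_nat (Suc j) * \<eta>) \<noteq> 1" unfolding xj by (simp add: algebra_simps)
    qed
    have eY: "complex_of_real \<epsilon> * coordmap N1 k m x (N1 + Suc L) = X - (of_nat k - 1) * \<eta> / 2"
      using 1 cy X_def by simp
    show ?thesis unfolding z using spec[OF _ \<epsilon> Xd own ownnz eY] k1 by simp
  next
    case 2
    define X where "X = - (f - of_nat (k-1) * \<eta>)"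
    have z: "(\<Sum>r<k. koorn_C n hb t0 t1 tn u0 un (N1 + k*L + r + 1) \<epsilon> x) = koorn_C n hb t0 t1 tn u0 un (N1 + k*L + (k-1) + 1) \<epsilon> x"
    proof (rule sum1)
      fix r assume r: "r < k" "r \<noteq> k-1"
      show "koorn_C n hb t0 t1 tn u0 un (N1 + k*L + r + 1) \<epsilon> x = 0"
      proof (rule koorn_C_zero)
        show "N1 + k*L + Suc r + 1 \<in> {1..n} - {N1 + k*L + r + 1}" using inb[of "Suc r"] r by auto
        have "- x (N1 + k*L + r + 1) + x (N1 + k*L + Suc r + 1) = - \<eta>"
          using r unfolding xb[OF r(1)] by (subst xb) (auto simp: algebra_simps)
        then show "g (complex_of_real \<epsilon> * x (N1 + k*L + r + 1) - x (N1 + k*L + Suc r + 1)) t1 1 = 0 \<or>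
                   g (complex_of_real \<epsilon> * x (N1 + k*L + r + 1) + x (N1 + k*L + Suc r + 1)) t1 1 = 0"
          using 2 gzero by simp
      qed
    qed (use k1 in simp)
    have Xd: "X = complex_of_real \<epsilon> * x (N1 + k*L + (k-1) + 1)" using 2 X_def xb[of "k-1"] k1 by simp
    have reg: "\<forall>j\<in>{1..n} - {N1 + k*L + (k-1) + 1}. exp (X - x j) \<noteq> 1 \<and> exp (X + x j) \<noteq> 1"
      using kreg_D(1)[OF kr inb[of "k-1"] \<epsilon>, unfolded Xd[symmetric]] k1 by simp
    have xo: "x (N1 + k*L + (k - 1 - Suc j) + 1) = f - (of_nat (k-1) - of_nat (Suc j)) * \<eta>" if "j < k-1" for j
      using xb[of "k - 1 - Suc j"] that by (simp add: of_nat_diff)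
    have a1: "X - x (N1 + k*L + (k - 1 - Suc j) + 1) = 2*X - of_nat (Suc j) * \<eta>" if "j < k-1" for j
      unfolding xo[OF that] X_def by (simp add: algebra_simps)
    have a2: "X + x (N1 + k*L + (k - 1 - Suc j) + 1) = of_nat (Suc j) * \<eta>" if "j < k-1" for j
      unfolding xo[OF that] X_def by (simp add: algebra_simps)
    have own: "(\<Prod>r<k. if r = k-1 then 1 else g (X - x (N1 + k*L + r + 1)) t1 1 * g (X + x (N1 + k*L + r + 1)) t1 1)
            = (\<Prod>j<k-1. g (of_nat (Suc j) * \<eta>) (exp (\<eta>/2)) 1 * g (2*X - of_nat (Suc j) * \<eta>) (exp (\<eta>/2)) 1)"
    proof -
      have "(\<Prod>r<k. if r = k-1 then 1 else g (X - x (N1 + k*L + r + 1)) t1 1 * g (X + x (N1 + k*L + r + 1)) t1 1)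
         = (\<Prod>r<k-1. g (X - x (N1 + k*L + r + 1)) t1 1 * g (X + x (N1 + k*L + r + 1)) t1 1)"
        by (subst kk, subst prod.lessThan_Suc) simp
      also have "\<dots> = (\<Prod>j<k-1. g (X - x (N1 + k*L + (k - 1 - Suc j) + 1)) t1 1 * g (X + x (N1 + k*L + (k - 1 - Suc j) + 1)) t1 1)"
        by (rule prod.nat_diff_reindex[symmetric])
      also have "\<dots> = (\<Prod>j<k-1. g (of_nat (Suc j) * \<eta>) (exp (\<eta>/2)) 1 * g (2*X - of_nat (Suc j) * \<eta>) (exp (\<eta>/2)) 1)"
      proof (rule prod.cong[OF refl])
        fix j assume "j \<in> {..<k-1}"
        then have j: "j < k-1" by simp
        show "g (X - x (N1 + k*L + (k - 1 - Suc j) + 1)) t1 1 * g (X + x (N1 + k*L + (k - 1 - Suc j) + 1)) t1 1 =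
           g (of_nat (Suc j) * \<eta>) (exp (\<eta>/2)) 1 * g (2*X - of_nat (Suc j) * \<eta>) (exp (\<eta>/2)) 1"
          unfolding a1[OF j] a2[OF j] t1 by (rule mult.commute)
      qed
      finally show ?thesis .
    qed
    have ownnz: "\<forall>j<k-1. exp (2*X - of_nat (Suc j) * \<eta>) \<noteq> 1"
    proof (intro allI impI)
      fix j assume j: "j < k-1"
      have "N1 + k*L + (k - 1 - Suc j) + 1 \<in> {1..n} - {N1 + k*L + (k-1) + 1}" using inb[of "k - 1 - Suc j"] j by auto
      then have "exp (X - x (N1 + k*L + (k - 1 - Suc j) + 1)) \<noteq> 1" using reg by blast
      then show "exp (2*X - of_nat (Suc j) * \<eta>) \<noteq> 1" unfolding a1[OF j] .
    qed
    have eY: "complex_of_real \<epsilon> * coordmap N1 k m x (N1 + Suc L) = X - (of_nat k - 1) * \<eta> / 2"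
    proof -
      have o: "(of_nat (k-1) :: complex) = of_nat k - 1" using k1 by (simp add: of_nat_diff)
      show ?thesis unfolding cy X_def o 2 by (simp add: field_simps)
    qed
    have km: "k - 1 < k" using k1 by simp
    show ?thesis unfolding z using spec[OF km \<epsilon> Xd own ownnz eY] by simp
  qed
qed

end


definition bavg :: "nat \<Rightarrow> nat \<Rightarrow> nat \<Rightarrow> real \<Rightarrow> nat \<Rightarrow> real" where
  "bavg N1 k L \<epsilon> = (\<lambda>j. if N1 + k*L < j \<and> j \<le> N1 + k*L + k then \<epsilon> / real k else 0)"

lemma ip_sr:
  assumes "1 \<le> p" "Suc p \<le> n"
  shows "ip n (simple_root p) \<mu> = \<mu> p - \<mu> (Suc p)"
proof -
  have "ip n (simple_root p) \<mu> = (\<Sum>j=1..n. (if j = p then \<mu> j else 0) - (if j = Suc p then \<mu> j else 0))"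
    unfolding ip_def simple_root_def by (rule sum.cong) auto
  also have "\<dots> = \<mu> p - \<mu> (Suc p)"
    using assms by (simp add: sum_subtractf)
  finally show ?thesis .
qed

lemma inblock:
  fixes k L L' r N1 :: nat
  assumes r: "r < k"
  shows "(N1 + k*L < N1 + k*L' + r + 1 \<and> N1 + k*L' + r + 1 \<le> N1 + k*L + k) \<longleftrightarrow> L' = L"
proof
  assume h: "N1 + k*L < N1 + k*L' + r + 1 \<and> N1 + k*L' + r + 1 \<le> N1 + k*L + k"
  show "L' = L"
  proof (rule ccontr)
    assume "L' \<noteq> L"
    then consider "L' < L" | "L < L'" by linarith
    then show False
    proof cases
      case 1
      then have "k * Suc L' \<le> k * L" by (intro mult_le_mono2) simp
      then show False using h r by simp
    next
      case 2
      then have "k * Suc L \<le> k * L'" by (intro mult_le_mono2) simp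
      then show False using h r by simp
    qed
  qed
qed (use r in simp)

context
  fixes k m N1 n :: nat
  assumes k2: "k \<ge> 2" and nk: "n = N1 + m * k"
begin

lemma S0_ip:
  assumes "\<alpha> \<in> S0_blocks N1 k m"
  obtains L r where "L < m" "Suc r < k" "\<alpha> = simple_root (N1 + k*L + r + 1)"
    "ip n \<alpha> \<mu> = \<mu> (N1 + k*L + r + 1) - \<mu> (N1 + k*L + Suc r + 1)"
proof -
  obtain l j where lj: "\<alpha> = simple_root (N1 + k*(l-1) + j)" "l \<in> {1..m}" "j \<in> {1..k-1}"
    using assms unfolding S0_blocks_def by blast
  define L where "L = l - 1"
  define r where "r = j - 1"
  have Lm: "L < m" and rk: "Suc r < k" using lj L_def r_def by auto
  have a: "\<alpha> = simple_root (N1 + k*L + r + 1)" using lj L_def r_def by auto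
  have "N1 + k*L + Suc r + 1 \<le> n" using blk_range(2)[OF Lm rk, of N1] nk by simp
  then have "ip n \<alpha> \<mu> = \<mu> (N1 + k*L + r + 1) - \<mu> (Suc (N1 + k*L + r + 1))"
    unfolding a by (intro ip_sr) auto
  then show ?thesis using that Lm rk a by simp
qed

lemma finite_S0: "finite (S0_blocks N1 k m)"
proof -
  have "S0_blocks N1 k m \<subseteq> (\<lambda>(l,j). simple_root (N1 + k*(l-1) + j)) ` ({1..m} \<times> {1..k-1})"
    unfolding S0_blocks_def by auto
  then show ?thesis by (rule finite_subset) simp
qed

lemma unitv_Vbar:
  assumes i: "i \<in> {1..N1}"
  shows "unitv i \<epsilon> \<in> Vbar n (S0_blocks N1 k m)"
  unfolding Vbar_def
proof (intro CollectI conjI allI impI ballI)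
  fix j assume "j \<notin> {1..n}" then show "unitv i \<epsilon> j = 0" using i nk by (auto simp: unitv_def)
next
  fix \<alpha> assume "\<alpha> \<in> S0_blocks N1 k m"
  then obtain L r where "L < m" "Suc r < k" "ip n \<alpha> (unitv i \<epsilon>) = unitv i \<epsilon> (N1 + k*L + r + 1) - unitv i \<epsilon> (N1 + k*L + Suc r + 1)"
    by (rule S0_ip)
  then show "ip n \<alpha> (unitv i \<epsilon>) = 0" using i by (simp add: unitv_def)
qed

lemma zero_Vbar: "(\<lambda>_. 0) \<in> Vbar n (S0_blocks N1 k m)"
  unfolding Vbar_def ip_def by simp

lemma bavg_Vbar:
  assumes L: "L < m"
  shows "bavg N1 k L \<epsilon> \<in> Vbar n (S0_blocks N1 k m)"
  unfolding Vbar_def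
proof (intro CollectI conjI allI impI ballI)
  fix j assume j: "j \<notin> {1..n}"
  have "N1 + k*L + k \<le> n" using blk_range(2)[OF L, of "k-1" k N1] nk k2 by simp
  then show "bavg N1 k L \<epsilon> j = 0" using j by (auto simp: bavg_def)
next
  fix \<alpha> assume "\<alpha> \<in> S0_blocks N1 k m"
  then obtain L' r where Lr: "L' < m" "Suc r < k" and
    e: "ip n \<alpha> (bavg N1 k L \<epsilon>) = bavg N1 k L \<epsilon> (N1 + k*L' + r + 1) - bavg N1 k L \<epsilon> (N1 + k*L' + Suc r + 1)"
    by (rule S0_ip)
  have r1: "r < k" using Lr by simp
  have "bavg N1 k L \<epsilon> (N1 + k*L' + r + 1) = bavg N1 k L \<epsilon> (N1 + k*L' + Suc r + 1)"
    unfolding bavg_def using inblock[OF r1, of N1 L L'] inblock[OF Lr(2), of N1 L L'] by simp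
  then show "ip n \<alpha> (bavg N1 k L \<epsilon>) = 0" using e by simp
qed

lemma proj_unique:
  assumes mu: "\<mu> \<in> Vbar n S0" and c: "\<forall>j. lam j - \<mu> j = (\<Sum>\<alpha>\<in>S0. c \<alpha> * \<alpha> j)" and fin: "finite S0"
  shows "proj n S0 lam = \<mu>"
  unfolding proj_def
proof (rule the_equality)
  show "\<mu> \<in> Vbar n S0 \<and> (\<exists>c. \<forall>j. lam j - \<mu> j = (\<Sum>\<alpha>\<in>S0. c \<alpha> * \<alpha> j))" using mu c by blast
next
  fix \<nu> assume "\<nu> \<in> Vbar n S0 \<and> (\<exists>c. \<forall>j. lam j - \<nu> j = (\<Sum>\<alpha>\<in>S0. c \<alpha> * \<alpha> j))"
  then obtain c' where nu: "\<nu> \<in> Vbar n S0" and c': "\<forall>j. lam j - \<nu> j = (\<Sum>\<alpha>\<in>S0. c' \<alpha> * \<alpha> j)" by blast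
  define d where "d j = \<mu> j - \<nu> j" for j
  have dsum: "d j = (\<Sum>\<alpha>\<in>S0. (c' \<alpha> - c \<alpha>) * \<alpha> j)" for j
  proof -
    have "d j = (lam j - \<nu> j) - (lam j - \<mu> j)" by (simp add: d_def)
    also have "\<dots> = (\<Sum>\<alpha>\<in>S0. c' \<alpha> * \<alpha> j) - (\<Sum>\<alpha>\<in>S0. c \<alpha> * \<alpha> j)" using c c' by simp
    also have "\<dots> = (\<Sum>\<alpha>\<in>S0. (c' \<alpha> - c \<alpha>) * \<alpha> j)" by (simp add: left_diff_distrib sum_subtractf)
    finally show ?thesis .
  qed
  have ipd: "ip n \<alpha> d = 0" if "\<alpha> \<in> S0" for \<alpha>
  proof -
    have "ip n \<alpha> d = ip n \<alpha> \<mu> - ip n \<alpha> \<nu>" unfolding ip_def d_def by (simp add: right_diff_distrib sum_subtractf)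
    then show ?thesis using mu nu that unfolding Vbar_def by simp
  qed
  have "(\<Sum>j=1..n. d j * d j) = (\<Sum>j=1..n. \<Sum>\<alpha>\<in>S0. (c' \<alpha> - c \<alpha>) * (\<alpha> j * d j))"
    by (subst (1) dsum) (simp add: sum_distrib_right mult.assoc)
  also have "\<dots> = (\<Sum>\<alpha>\<in>S0. (c' \<alpha> - c \<alpha>) * ip n \<alpha> d)"
    unfolding ip_def by (subst sum.swap) (simp add: sum_distrib_left)
  also have "\<dots> = 0" using ipd by simp
  finally have sq: "(\<Sum>j=1..n. d j * d j) = 0" .
  have "\<forall>j\<in>{1..n}. d j * d j = 0"
    using sum_nonneg_eq_0_iff[of "{1..n}" "\<lambda>j. d j * d j"] sq by simp
  then have "d j = 0" if "j \<in> {1..n}" for j using that by simp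
  moreover have "d j = 0" if "j \<notin> {1..n}" for j using that mu nu unfolding Vbar_def d_def by simp
  ultimately show "\<nu> = \<mu>" unfolding d_def by (metis eq_iff_diff_eq_0 ext)
qed

lemma proj_unitv:
  assumes i: "i \<in> {1..N1}"
  shows "proj n (S0_blocks N1 k m) (unitv i \<epsilon>) = unitv i \<epsilon>"
  by (rule proj_unique[OF unitv_Vbar[OF i], where c="\<lambda>_. 0"]) (simp_all add: finite_S0)

lemma proj_zero: "proj n (S0_blocks N1 k m) (\<lambda>_. 0) = (\<lambda>_. 0)"
  by (rule proj_unique[OF zero_Vbar, where c="\<lambda>_. 0"]) (simp_all add: finite_S0)

lemma delta_shift:
  fixes f :: "nat \<Rightarrow> real"
  shows "(\<Sum>j<K. f j * (if i = B + j then 1 else 0)) = (if B \<le> i \<and> i < B + K then f (i - B) else 0)"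
proof -
  have "(\<Sum>j<K. f j * (if i = B + j then 1 else 0)) = (\<Sum>j<K. if B \<le> i \<and> j = i - B then f j else 0)"
    by (rule sum.cong) auto
  also have "\<dots> = (if B \<le> i \<and> i < B + K then f (i - B) else 0)"
    by (cases "B \<le> i") (auto simp: sum.delta')
  finally show ?thesis .
qed

lemma proj_blk:
  assumes L: "L < m" and r: "r < k"
  shows "proj n (S0_blocks N1 k m) (unitv (N1 + k*L + r + 1) \<epsilon>) = bavg N1 k L \<epsilon>"
proof -
  define b where "b = N1 + k*L"
  define cf where "cf j = \<epsilon> * ((if r \<le> j then 1 else 0) - real (Suc j) / real k)" for j
  define c where "c \<alpha> = (\<Sum>j<k-1. if \<alpha> = simple_root (b + j + 1) then cf j else 0)" for \<alpha>
  have srS: "simple_root (b + j + 1) \<in> S0_blocks N1 k m" if "j < k-1" for j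
    unfolding S0_mem b_def using L that by auto
  have kpos: "real k > 0" using k2 by simp
  show ?thesis
  proof (rule proj_unique[OF bavg_Vbar[OF L] _ finite_S0], intro allI)
    fix i
    have "(\<Sum>\<alpha>\<in>S0_blocks N1 k m. c \<alpha> * \<alpha> i) = (\<Sum>j<k-1. \<Sum>\<alpha>\<in>S0_blocks N1 k m. if \<alpha> = simple_root (b + j + 1) then cf j * \<alpha> i else 0)"
      unfolding c_def sum_distrib_right by (subst sum.swap) (intro sum.cong refl, simp)
    also have "\<dots> = (\<Sum>j<k-1. cf j * simple_root (b + j + 1) i)"
      using srS finite_S0 by (intro sum.cong refl) (simp add: sum.delta)
    also have "\<dots> = (\<Sum>j<k-1. cf j * (if i = (b + 1) + j then 1 else 0)) - (\<Sum>j<k-1. cf j * (if i = (b + 2) + j then 1 else 0))"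
      unfolding sum_subtractf[symmetric] simple_root_def by (intro sum.cong refl) auto
    also have "\<dots> = (if b + 1 \<le> i \<and> i < b + 1 + (k-1) then cf (i - (b+1)) else 0) - (if b + 2 \<le> i \<and> i < b + 2 + (k-1) then cf (i - (b+2)) else 0)"
      unfolding delta_shift ..
    also have "\<dots> = unitv (N1 + k*L + r + 1) \<epsilon> i - bavg N1 k L \<epsilon> i"
    proof -
      have lhs: "unitv (N1 + k*L + r + 1) \<epsilon> i - bavg N1 k L \<epsilon> i = (if i = b + r + 1 then \<epsilon> else 0) - (if b < i \<and> i \<le> b + k then \<epsilon> / real k else 0)"
        unfolding unitv_def bavg_def b_def by simp
      consider "i \<le> b" | "b + k < i" | q where "i = b + q" "1 \<le> q" "q \<le> k"
      proof -
        consider "i \<le> b" | "b + k < i" | "b < i" "i \<le> b + k" by linarith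
        then show thesis
        proof cases
          case 3
          then have "i = b + (i - b)" "1 \<le> i - b" "i - b \<le> k" by auto
          then show thesis using that(3) by blast
        qed (use that in auto)
      qed
      then show ?thesis
      proof cases
        case 1 then show ?thesis unfolding lhs by auto
      next
        case 2 then show ?thesis unfolding lhs using r by auto
      next
        case 3
        consider "q = 1" | "2 \<le> q" "q \<le> k - 1" | "q = k" using 3 by linarith
        then show ?thesis
        proof cases
          case 1
          then show ?thesis unfolding lhs using 3 k2 kpos by (auto simp: cf_def field_simps)
        next
          case 2
          have e1: "i - (b+1) = q - 1" "i - (b+2) = q - 2" using 3 by auto
          have "real (Suc (q - 1)) = real (Suc (q-2)) + 1" using 2 by simp
          moreover have "(if r \<le> q - 1 then 1 else 0) - (if r \<le> q - 2 then 1 else (0::real)) = (if q = r + 1 then 1 else 0)"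
            using 2 by auto
          ultimately have "cf (q-1) - cf (q-2) = (if q = r + 1 then \<epsilon> else 0) - \<epsilon> / real k"
            unfolding cf_def using kpos by (simp add: field_simps)
          then show ?thesis unfolding lhs using 3 2 e1 by auto
        next
          case 4: 3
          have e2: "i - (b+2) = k - 2" using 3 4 by auto
          have "real (Suc (k - 2)) = real k - 1" using k2 by (simp add: of_nat_diff)
          then have "- cf (k - 2) = (if k = r + 1 then \<epsilon> else 0) - \<epsilon> / real k"
            unfolding cf_def using kpos r by (auto simp: field_simps)
          then show ?thesis unfolding lhs using 3 4 e2 k2 by auto
        qed
      qed
    qed
    finally show "unitv (N1 + k*L + r + 1) \<epsilon> i - bavg N1 k L \<epsilon> i = (\<Sum>\<alpha>\<in>S0_blocks N1 k m. c \<alpha> * \<alpha> i)" ..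
  qed
qed

end


definition Phi :: "nat \<Rightarrow> nat \<Rightarrow> nat \<Rightarrow> complex \<Rightarrow> (nat \<Rightarrow> real) \<Rightarrow> nat \<Rightarrow> complex" where
  "Phi N1 k m hb \<mu> = coordmap N1 k m (\<lambda>j. hb * complex_of_real (\<mu> j))"

context
  fixes k m N1 n :: nat and \<eta> hb :: complex
  assumes k2: "k \<ge> 2" and nk: "n = N1 + m * k"
    and hk: "hb = of_nat k * \<eta>"
    and hq: "\<forall>r\<in>(\<rat>::real set). hb \<noteq> \<i> * complex_of_real (pi * r)"
begin

lemma hb0: "hb \<noteq> 0"
  using hq[rule_format, of 0] by simp

lemma Vbar_const:
  assumes mu: "\<mu> \<in> Vbar n (S0_blocks N1 k m)" and L: "L < m" and r: "r < k"
  shows "\<mu> (N1 + k*L + r + 1) = \<mu> (N1 + k*L + 1)"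
  using r
proof (induction r)
  case 0 then show ?case by simp
next
  case (Suc r)
  have S: "simple_root (N1 + k*L + r + 1) \<in> S0_blocks N1 k m"
    using S0_mem[of "N1 + k*L + r + 1" N1 k m] L Suc.prems by blast
  have "N1 + k*L + Suc r + 1 \<le> n" using blk_range(2)[OF L Suc.prems, of N1] nk by simp
  then have "ip n (simple_root (N1 + k*L + r + 1)) \<mu> = \<mu> (N1 + k*L + r + 1) - \<mu> (Suc (N1 + k*L + r + 1))"
    by (intro ip_sr) auto
  moreover have "ip n (simple_root (N1 + k*L + r + 1)) \<mu> = 0" using mu S unfolding Vbar_def by blast
  ultimately show ?case using Suc by simp
qed

lemma Phi_blk:
  assumes mu: "\<mu> \<in> Vbar n (S0_blocks N1 k m)" and L: "L < m"
  shows "Phi N1 k m hb \<mu> (N1 + Suc L) = hb * complex_of_real (\<mu> (N1 + k*L + 1))"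
proof -
  have "Phi N1 k m hb \<mu> (N1 + Suc L) = (1 / of_nat k) * (\<Sum>s<k. hb * complex_of_real (\<mu> (N1 + k * Suc L - s)))"
    using L by (simp add: Phi_def coordmap_def)
  also have "(\<Sum>s<k. hb * complex_of_real (\<mu> (N1 + k * Suc L - s))) = (\<Sum>s<k. hb * complex_of_real (\<mu> (N1 + k*L + (k - Suc s) + 1)))"
  proof (rule sum.cong)
    fix s assume "s \<in> {..<k}"
    then have "N1 + k * Suc L - s = N1 + k*L + (k - Suc s) + 1" by simp
    then show "hb * complex_of_real (\<mu> (N1 + k * Suc L - s)) = hb * complex_of_real (\<mu> (N1 + k*L + (k - Suc s) + 1))" by simp
  qed simp
  also have "\<dots> = (\<Sum>r<k. hb * complex_of_real (\<mu> (N1 + k*L + r + 1)))"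
    by (rule sum.nat_diff_reindex)
  also have "\<dots> = (\<Sum>r<k. hb * complex_of_real (\<mu> (N1 + k*L + 1)))"
  proof (rule sum.cong[OF refl])
    fix r assume "r \<in> {..<k}"
    then show "hb * complex_of_real (\<mu> (N1 + k*L + r + 1)) = hb * complex_of_real (\<mu> (N1 + k*L + 1))"
      using Vbar_const[OF mu L, of r] by simp
  qed
  finally show ?thesis using k2 by simp
qed

lemma Phi_x:
  assumes "j \<in> {1..N1}" shows "Phi N1 k m hb \<mu> j = hb * complex_of_real (\<mu> j)"
  using assms by (simp add: Phi_def coordmap_def)

lemma Phi_inj:
  assumes m1: "\<mu>1 \<in> Vbar n (S0_blocks N1 k m)" and m2: "\<mu>2 \<in> Vbar n (S0_blocks N1 k m)"
    and e: "Phi N1 k m hb \<mu>1 = Phi N1 k m hb \<mu>2"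
  shows "\<mu>1 = \<mu>2"
proof (rule ext)
  fix j
  consider "j \<notin> {1..n}" | "j \<in> {1..N1}" | "N1 < j" "j \<le> n" by fastforce
  then show "\<mu>1 j = \<mu>2 j"
  proof cases
    case 1 then show ?thesis using m1 m2 unfolding Vbar_def by simp
  next
    case 2
    have "hb * complex_of_real (\<mu>1 j) = hb * complex_of_real (\<mu>2 j)"
      using e Phi_x[OF 2] by metis
    then show ?thesis using hb0 by simp
  next
    case 3
    define L where "L = (j - N1 - 1) div k"
    define r where "r = (j - N1 - 1) mod k"
    have rk: "r < k" using k2 r_def by simp
    have jeq: "j = N1 + k*L + r + 1" using 3 unfolding L_def r_def by simp
    have "j - N1 - 1 < m * k" using 3 nk by simp
    then have Lm: "L < m" unfolding L_def using k2 by (simp add: less_mult_imp_div_less)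
    have "hb * complex_of_real (\<mu>1 (N1 + k*L + 1)) = hb * complex_of_real (\<mu>2 (N1 + k*L + 1))"
      using Phi_blk[OF m1 Lm] Phi_blk[OF m2 Lm] e by metis
    then have "\<mu>1 (N1 + k*L + 1) = \<mu>2 (N1 + k*L + 1)" using hb0 by simp
    then show ?thesis unfolding jeq using Vbar_const[OF m1 Lm rk] Vbar_const[OF m2 Lm rk] by simp
  qed
qed

lemma Phi_unitv:
  assumes i: "i \<in> {1..N1}"
  shows "Phi N1 k m hb (unitv i \<epsilon>) = unitv i (complex_of_real \<epsilon> * hb)"
proof (rule ext)
  fix j
  show "Phi N1 k m hb (unitv i \<epsilon>) j = unitv i (complex_of_real \<epsilon> * hb) j"
  proof (cases "1 \<le> j \<and> j \<le> N1")
    case True then show ?thesis by (simp add: Phi_def coordmap_def unitv_def)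
  next
    case False
    have "(\<Sum>s<k. hb * complex_of_real (unitv i \<epsilon> (N1 + k * (j - N1) - s))) = 0" if "N1 < j"
    proof (rule sum.neutral, intro ballI)
      fix s assume "s \<in> {..<k}"
      then have sk: "s < k" by simp
      have "k * 1 \<le> k * (j - N1)" using that by (intro mult_le_mono2) simp
      then have "N1 + k * (j - N1) - s > N1" using sk by linarith
      then show "hb * complex_of_real (unitv i \<epsilon> (N1 + k * (j - N1) - s)) = 0" using i by (simp add: unitv_def)
    qed
    then show ?thesis using False i by (auto simp: Phi_def coordmap_def unitv_def)
  qed
qed

lemma Phi_zero: "Phi N1 k m hb (\<lambda>_. 0) = (\<lambda>_. 0)"
  by (rule ext) (simp add: Phi_def coordmap_def)

lemma Phi_bavg:
  assumes L: "L < m"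
  shows "Phi N1 k m hb (bavg N1 k L \<epsilon>) = unitv (N1 + Suc L) (complex_of_real \<epsilon> * \<eta>)"
proof (rule ext)
  fix j
  consider "1 \<le> j \<and> j \<le> N1" | L' where "j = N1 + Suc L'" "L' < m" | "\<not> (1 \<le> j \<and> j \<le> N1 + m)"
  proof -
    consider "1 \<le> j \<and> j \<le> N1" | "N1 < j \<and> j \<le> N1 + m" | "\<not> (1 \<le> j \<and> j \<le> N1 + m)" by linarith
    then show thesis
    proof cases
      case 2
      then have "j = N1 + Suc (j - N1 - 1)" "j - N1 - 1 < m" by auto
      then show thesis using that(2) by blast
    qed (use that in auto)
  qed
  then show "Phi N1 k m hb (bavg N1 k L \<epsilon>) j = unitv (N1 + Suc L) (complex_of_real \<epsilon> * \<eta>) j"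
  proof cases
    case 1 then show ?thesis by (auto simp: Phi_def coordmap_def unitv_def bavg_def)
  next
    case 2
    have b0: "bavg N1 k L \<epsilon> (N1 + k*L' + 0 + 1) = (if L' = L then \<epsilon> / real k else 0)"
      using inblock[of 0 k N1 L L'] k2 unfolding bavg_def by simp
    have "Phi N1 k m hb (bavg N1 k L \<epsilon>) j = hb * complex_of_real (bavg N1 k L \<epsilon> (N1 + k*L' + 1))"
      unfolding 2 by (rule Phi_blk[OF bavg_Vbar[OF k2 nk L] 2(2)])
    also have "\<dots> = (if L' = L then complex_of_real \<epsilon> * \<eta> else 0)"
      using b0 k2 by (auto simp: hk field_simps)
    finally show ?thesis unfolding 2 by (auto simp: unitv_def)
  next
    case 3 then show ?thesis using L by (auto simp: Phi_def coordmap_def unitv_def)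
  qed
qed

lemma condA:
  assumes lam: "lam \<in> Vbar n (S0_blocks N1 k m)" and i: "i \<in> {1..N1}"
  shows "(Phi N1 k m hb lam = unitv i (complex_of_real \<epsilon> * hb)) = (lam = unitv i \<epsilon>)"
  using Phi_inj[OF lam unitv_Vbar[OF k2 nk i]] Phi_unitv[OF i] by metis

lemma condB:
  assumes lam: "lam \<in> Vbar n (S0_blocks N1 k m)" and L: "L < m"
  shows "(Phi N1 k m hb lam = unitv (N1 + Suc L) (complex_of_real \<epsilon> * \<eta>)) = (lam = bavg N1 k L \<epsilon>)"
  using Phi_inj[OF lam bavg_Vbar[OF k2 nk L]] Phi_bavg[OF L] by metis

lemma condZ:
  assumes lam: "lam \<in> Vbar n (S0_blocks N1 k m)"
  shows "(Phi N1 k m hb lam = (\<lambda>_. 0)) = (lam = (\<lambda>_. 0))"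
  using Phi_inj[OF lam zero_Vbar[OF k2 nk]] Phi_zero by metis

end


lemma SUPP:
  fixes C :: "'i \<Rightarrow> 'e \<Rightarrow> 'b::comm_ring_1" and u :: "'i \<Rightarrow> 'e \<Rightarrow> 'a"
  assumes S: "finite S" and I: "finite I" and E: "finite E"
    and u: "\<And>i e. i \<in> I \<Longrightarrow> e \<in> E \<Longrightarrow> u i e \<in> S" and z: "z \<in> S"
  shows "(\<Sum>lam\<in>S. if P lam then (\<Sum>i\<in>I. \<Sum>e\<in>E. if lam = u i e then C i e else 0) + (if lam = z then Z else 0) else 0)
       = (\<Sum>i\<in>I. \<Sum>e\<in>E. if P (u i e) then C i e else 0) + (if P z then Z else 0)"
proof -
  have pw: "(if P lam then (\<Sum>i\<in>I. \<Sum>e\<in>E. if lam = u i e then C i e else 0) + (if lam = z then Z else 0) else 0)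
     = (\<Sum>i\<in>I. \<Sum>e\<in>E. if lam = u i e then (if P (u i e) then C i e else 0) else 0) + (if lam = z then (if P z then Z else 0) else 0)" for lam
    by (cases "P lam") (auto intro!: sum.cong sum.neutral)
  have "(\<Sum>lam\<in>S. if P lam then (\<Sum>i\<in>I. \<Sum>e\<in>E. if lam = u i e then C i e else 0) + (if lam = z then Z else 0) else 0)
     = (\<Sum>lam\<in>S. \<Sum>i\<in>I. \<Sum>e\<in>E. if lam = u i e then (if P (u i e) then C i e else 0) else 0) + (\<Sum>lam\<in>S. if lam = z then (if P z then Z else 0) else 0)"
    unfolding pw by (simp add: sum.distrib)
  also have "(\<Sum>lam\<in>S. \<Sum>i\<in>I. \<Sum>e\<in>E. if lam = u i e then (if P (u i e) then C i e else 0) else 0)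
      = (\<Sum>i\<in>I. \<Sum>e\<in>E. \<Sum>lam\<in>S. if lam = u i e then (if P (u i e) then C i e else 0) else 0)"
    by (subst sum.swap) (simp add: sum.swap[of _ S])
  also have "\<dots> = (\<Sum>i\<in>I. \<Sum>e\<in>E. if P (u i e) then C i e else 0)"
    using u S by (intro sum.cong refl) (simp add: sum.delta)
  also have "(\<Sum>lam\<in>S. if lam = z then (if P z then Z else 0) else 0) = (if P z then Z else 0)"
    using z S by (simp add: sum.delta)
  finally show ?thesis .
qed

lemma finite_supp: "finite (koorn_supp n)"
proof -
  have "koorn_supp n \<subseteq> (\<lambda>(i,\<epsilon>). unitv i \<epsilon>) ` ({1..n} \<times> {1, -1}) \<union> {\<lambda>_. 0}"
    unfolding koorn_supp_def by auto
  then show ?thesis by (rule finite_subset) simp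
qed

context
  fixes k m N1 n :: nat and \<eta> hb t1 :: complex
  assumes k2: "k \<ge> 2" and nk: "n = N1 + m * k"
    and hk: "hb = of_nat k * \<eta>"
    and hq: "\<forall>r\<in>(\<rat>::real set). hb \<noteq> \<i> * complex_of_real (pi * r)"
    and t1: "t1 = exp (\<eta> / 2)"
begin

lemma DEC:
  fixes t0 tn u0 un :: complex and x :: "nat \<Rightarrow> complex" and W :: "(nat \<Rightarrow> real) \<Rightarrow> complex"
  assumes x: "x \<in> D0 n (S0_blocks N1 k m) \<eta>"
    and kr: "koorn_regular n hb x"
    and gr: "gk_regular N1 m hb \<eta> (coordmap N1 k m x)"
  shows "(\<Sum>i\<in>{1..n}. \<Sum>\<epsilon>\<in>{1,-1}. W (proj n (S0_blocks N1 k m) (unitv i \<epsilon>)) * koorn_C n hb t0 t1 tn u0 un i \<epsilon> x)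
   = (\<Sum>i\<in>{1..N1}. \<Sum>\<epsilon>\<in>{1,-1}. W (unitv i \<epsilon>) * (inverse (t0 * tn) *
       gk_A N1 m hb \<eta> (t0 * u0 * inverse (exp (hb / 2))) (- (t0 * inverse u0 * inverse (exp (hb / 2))))
              (tn * un) (- (tn * inverse un)) i \<epsilon> (coordmap N1 k m x)))
   + (\<Sum>L<m. \<Sum>\<epsilon>\<in>{1,-1}. W (bavg N1 k L \<epsilon>) * (inverse (t0 * tn) *
     ((1 - (inverse (exp (hb / 2)))^2) / (1 - (inverse (exp (\<eta> / 2)))^2) *
     gk_B N1 m hb \<eta> (t0 * u0 * inverse (exp (hb / 2))) (- (t0 * inverse u0 * inverse (exp (hb / 2))))
              (tn * un) (- (tn * inverse un)) (Suc L) \<epsilon> (coordmap N1 k m x))))"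
proof -
  have a: "(\<Sum>i\<in>{1..N1}. \<Sum>\<epsilon>\<in>{1,-1}. W (proj n (S0_blocks N1 k m) (unitv i \<epsilon>)) * koorn_C n hb t0 t1 tn u0 un i \<epsilon> x)
     = (\<Sum>i\<in>{1..N1}. \<Sum>\<epsilon>\<in>{1,-1}. W (unitv i \<epsilon>) * (inverse (t0 * tn) *
       gk_A N1 m hb \<eta> (t0 * u0 * inverse (exp (hb / 2))) (- (t0 * inverse u0 * inverse (exp (hb / 2))))
              (tn * un) (- (tn * inverse un)) i \<epsilon> (coordmap N1 k m x)))"
  proof (intro sum.cong refl)
    fix i \<epsilon> assume i: "i \<in> {1..N1}" and e: "\<epsilon> \<in> {1, -1::real}"
    show "W (proj n (S0_blocks N1 k m) (unitv i \<epsilon>)) * koorn_C n hb t0 t1 tn u0 un i \<epsilon> x =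
      W (unitv i \<epsilon>) * (inverse (t0 * tn) *
       gk_A N1 m hb \<eta> (t0 * u0 * inverse (exp (hb / 2))) (- (t0 * inverse u0 * inverse (exp (hb / 2))))
              (tn * un) (- (tn * inverse un)) i \<epsilon> (coordmap N1 k m x))"
      unfolding proj_unitv[OF k2 nk i] IDA[OF k2 nk hk hq t1 x kr i e] ..
  qed
  have b: "(\<Sum>r<k. \<Sum>\<epsilon>\<in>{1,-1}. W (proj n (S0_blocks N1 k m) (unitv (N1 + k*L + r + 1) \<epsilon>)) * koorn_C n hb t0 t1 tn u0 un (N1 + k*L + r + 1) \<epsilon> x)
     = (\<Sum>\<epsilon>\<in>{1,-1}. W (bavg N1 k L \<epsilon>) * (inverse (t0 * tn) *
     ((1 - (inverse (exp (hb / 2)))^2) / (1 - (inverse (exp (\<eta> / 2)))^2) *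
     gk_B N1 m hb \<eta> (t0 * u0 * inverse (exp (hb / 2))) (- (t0 * inverse u0 * inverse (exp (hb / 2))))
              (tn * un) (- (tn * inverse un)) (Suc L) \<epsilon> (coordmap N1 k m x))))" if L: "L < m" for L
  proof -
    have "(\<Sum>r<k. \<Sum>\<epsilon>\<in>{1,-1}. W (proj n (S0_blocks N1 k m) (unitv (N1 + k*L + r + 1) \<epsilon>)) * koorn_C n hb t0 t1 tn u0 un (N1 + k*L + r + 1) \<epsilon> x)
       = (\<Sum>r<k. \<Sum>\<epsilon>\<in>{1,-1}. W (bavg N1 k L \<epsilon>) * koorn_C n hb t0 t1 tn u0 un (N1 + k*L + r + 1) \<epsilon> x)"
    proof (intro sum.cong refl)
      fix r \<epsilon> assume "r \<in> {..<k}"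
      then have r: "r < k" by simp
      show "W (proj n (S0_blocks N1 k m) (unitv (N1 + k*L + r + 1) \<epsilon>)) * koorn_C n hb t0 t1 tn u0 un (N1 + k*L + r + 1) \<epsilon> x
        = W (bavg N1 k L \<epsilon>) * koorn_C n hb t0 t1 tn u0 un (N1 + k*L + r + 1) \<epsilon> x"
        unfolding proj_blk[OF k2 nk L r] ..
    qed
    also have "\<dots> = (\<Sum>\<epsilon>\<in>{1,-1}. W (bavg N1 k L \<epsilon>) * (\<Sum>r<k. koorn_C n hb t0 t1 tn u0 un (N1 + k*L + r + 1) \<epsilon> x))"
      by (subst sum.swap) (simp add: sum_distrib_left)
    also have "\<dots> = (\<Sum>\<epsilon>\<in>{1,-1}. W (bavg N1 k L \<epsilon>) * (inverse (t0 * tn) *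
     ((1 - (inverse (exp (hb / 2)))^2) / (1 - (inverse (exp (\<eta> / 2)))^2) *
     gk_B N1 m hb \<eta> (t0 * u0 * inverse (exp (hb / 2))) (- (t0 * inverse u0 * inverse (exp (hb / 2))))
              (tn * un) (- (tn * inverse un)) (Suc L) \<epsilon> (coordmap N1 k m x))))"
    proof (intro sum.cong refl)
      fix \<epsilon> assume e: "\<epsilon> \<in> {1, -1::real}"
      show "W (bavg N1 k L \<epsilon>) * (\<Sum>r<k. koorn_C n hb t0 t1 tn u0 un (N1 + k*L + r + 1) \<epsilon> x) =
        W (bavg N1 k L \<epsilon>) * (inverse (t0 * tn) *
     ((1 - (inverse (exp (hb / 2)))^2) / (1 - (inverse (exp (\<eta> / 2)))^2) *
     gk_B N1 m hb \<eta> (t0 * u0 * inverse (exp (hb / 2))) (- (t0 * inverse u0 * inverse (exp (hb / 2))))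
              (tn * un) (- (tn * inverse un)) (Suc L) \<epsilon> (coordmap N1 k m x)))"
        unfolding IDB[OF k2 nk hk hq t1 x kr gr L e] ..
    qed
    finally show ?thesis .
  qed
  have sb: "(\<Sum>i\<in>{1..n}. \<Sum>\<epsilon>\<in>{1,-1}. W (proj n (S0_blocks N1 k m) (unitv i \<epsilon>)) * koorn_C n hb t0 t1 tn u0 un i \<epsilon> x)
    = (\<Sum>i\<in>{1..N1}. \<Sum>\<epsilon>\<in>{1,-1}. W (proj n (S0_blocks N1 k m) (unitv i \<epsilon>)) * koorn_C n hb t0 t1 tn u0 un i \<epsilon> x)
    + (\<Sum>L<m. \<Sum>r<k. \<Sum>\<epsilon>\<in>{1,-1}. W (proj n (S0_blocks N1 k m) (unitv (N1 + k*L + r + 1) \<epsilon>)) * koorn_C n hb t0 t1 tn u0 un (N1 + k*L + r + 1) \<epsilon> x)"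
    unfolding nk by (rule sum_blocks)
  show ?thesis
    unfolding sb a
    by (rule arg_cong[where f="\<lambda>t. _ + t"], rule sum.cong[OF refl], rule b) simp
qed

lemma IDENT:
  fixes t0 tn u0 un :: complex and x :: "nat \<Rightarrow> complex" and lam' :: "nat \<Rightarrow> real"
  assumes x: "x \<in> D0 n (S0_blocks N1 k m) \<eta>"
    and kr: "koorn_regular n hb x"
    and gr: "gk_regular N1 m hb \<eta> (coordmap N1 k m x)"
    and lam: "lam' \<in> Vbar n (S0_blocks N1 k m)"
  shows "restrict_coeff n (S0_blocks N1 k m) (koorn_supp n) (koorn_op n hb t0 t1 tn u0 un) lam' x =
          inverse (t0 * tn) *
            gk_op N1 m hb \<eta>
              (t0 * u0 * inverse (exp (hb / 2))) (- (t0 * inverse u0 * inverse (exp (hb / 2))))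
              (tn * un) (- (tn * inverse un))
              (coordmap N1 k m (\<lambda>j. hb * complex_of_real (lam' j))) (coordmap N1 k m x)
          + (if lam' = (\<lambda>_. 0) then kappa_t n t0 t1 tn else 0)"
proof -
  define C where "C i \<epsilon> = koorn_C n hb t0 t1 tn u0 un i \<epsilon> x" for i \<epsilon>
  define A where "A i \<epsilon> = gk_A N1 m hb \<eta> (t0 * u0 * inverse (exp (hb / 2))) (- (t0 * inverse u0 * inverse (exp (hb / 2))))
              (tn * un) (- (tn * inverse un)) i \<epsilon> (coordmap N1 k m x)" for i \<epsilon>
  define B where "B l \<epsilon> = gk_B N1 m hb \<eta> (t0 * u0 * inverse (exp (hb / 2))) (- (t0 * inverse u0 * inverse (exp (hb / 2))))
              (tn * un) (- (tn * inverse un)) l \<epsilon> (coordmap N1 k m x)" for l \<epsilon>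
  define cB where "cB = (1 - (inverse (exp (hb / 2)))^2) / (1 - (inverse (exp (\<eta> / 2)))^2)"
  define S where "S = S0_blocks N1 k m"
  define Z where "Z = (\<lambda>_::nat. 0::real)"
  note dec = DEC[OF x kr gr, of "\<lambda>v. if lam' = v then 1 else 0" t0 tn u0 un, folded C_def A_def B_def cB_def S_def]
  note dec1 = DEC[OF x kr gr, of "\<lambda>v. 1" t0 tn u0 un, folded C_def A_def B_def cB_def S_def]
  have r1: "restrict_coeff n S (koorn_supp n) (koorn_op n hb t0 t1 tn u0 un) lam' x
     = (\<Sum>i\<in>{1..n}. \<Sum>\<epsilon>\<in>{1,-1}. if proj n S (unitv i \<epsilon>) = lam' then C i \<epsilon> else 0)
       + (if proj n S Z = lam' then kappa_t n t0 t1 tn - (\<Sum>i\<in>{1..n}. \<Sum>\<epsilon>\<in>{1,-1}. C i \<epsilon>) else 0)"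
    unfolding restrict_coeff_def sum.inter_filter[OF finite_supp] koorn_op_def C_def[symmetric] Z_def
    by (rule SUPP[OF finite_supp]) (auto simp: koorn_supp_def)
  have pz: "proj n S Z = Z" unfolding S_def Z_def by (rule proj_zero[OF k2 nk])
  have r2: "(\<Sum>i\<in>{1..n}. \<Sum>\<epsilon>\<in>{1,-1}. if proj n S (unitv i \<epsilon>) = lam' then C i \<epsilon> else 0)
     = (\<Sum>i\<in>{1..n}. \<Sum>\<epsilon>\<in>{1,-1::real}. (if lam' = proj n S (unitv i \<epsilon>) then 1 else 0) * C i \<epsilon>)"
    by (intro sum.cong refl) auto
  have r3: "(\<Sum>i\<in>{1..n}. \<Sum>\<epsilon>\<in>{1,-1}. C i \<epsilon>) = (\<Sum>i\<in>{1..n}. \<Sum>\<epsilon>\<in>{1,-1::real}. 1 * C i \<epsilon>)" by simp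
  have Phi_eq: "coordmap N1 k m (\<lambda>j. hb * complex_of_real (lam' j)) = Phi N1 k m hb lam'" by (simp add: Phi_def)
  have g1: "(\<Sum>i\<in>{1..N1}. \<Sum>\<epsilon>\<in>{1,-1}. if Phi N1 k m hb lam' = unitv i (complex_of_real \<epsilon> * hb) then A i \<epsilon> else 0)
     = (\<Sum>i\<in>{1..N1}. \<Sum>\<epsilon>\<in>{1,-1}. if lam' = unitv i \<epsilon> then A i \<epsilon> else 0)"
    by (intro sum.cong refl) (simp add: condA[OF k2 nk hk hq lam])
  have g2: "(\<Sum>l\<in>{1..m}. \<Sum>\<epsilon>\<in>{1,-1}. if Phi N1 k m hb lam' = unitv (N1 + l) (complex_of_real \<epsilon> * \<eta>) then cB * B l \<epsilon> else 0)
     = (\<Sum>L<m. \<Sum>\<epsilon>\<in>{1,-1}. if lam' = bavg N1 k L \<epsilon> then cB * B (Suc L) \<epsilon> else 0)"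
    unfolding sum_1m
  proof (intro sum.cong refl)
    fix L \<epsilon> assume "L \<in> {..<m}"
    then have L: "L < m" by simp
    show "(if Phi N1 k m hb lam' = unitv (N1 + Suc L) (complex_of_real \<epsilon> * \<eta>) then cB * B (Suc L) \<epsilon> else 0)
       = (if lam' = bavg N1 k L \<epsilon> then cB * B (Suc L) \<epsilon> else 0)"
      unfolding condB[OF k2 nk hk hq lam L] ..
  qed
  have g3: "(Phi N1 k m hb lam' = (\<lambda>_. 0)) = (lam' = Z)" unfolding Z_def by (rule condZ[OF k2 nk hk hq lam])
  have lhs: "restrict_coeff n S (koorn_supp n) (koorn_op n hb t0 t1 tn u0 un) lam' x =
     (\<Sum>i\<in>{1..N1}. \<Sum>\<epsilon>\<in>{1,-1::real}. (if lam' = unitv i \<epsilon> then 1 else 0) * (inverse (t0 * tn) * A i \<epsilon>))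
   + (\<Sum>L<m. \<Sum>\<epsilon>\<in>{1,-1::real}. (if lam' = bavg N1 k L \<epsilon> then 1 else 0) * (inverse (t0 * tn) * (cB * B (Suc L) \<epsilon>)))
   + (if lam' = Z then kappa_t n t0 t1 tn - ((\<Sum>i\<in>{1..N1}. \<Sum>\<epsilon>\<in>{1,-1::real}. 1 * (inverse (t0 * tn) * A i \<epsilon>))
   + (\<Sum>L<m. \<Sum>\<epsilon>\<in>{1,-1::real}. 1 * (inverse (t0 * tn) * (cB * B (Suc L) \<epsilon>))))  else 0)"
    unfolding r1 r2 pz dec r3 dec1 by (simp add: eq_commute[of Z lam'])
  have rhs: "gk_op N1 m hb \<eta>
              (t0 * u0 * inverse (exp (hb / 2))) (- (t0 * inverse u0 * inverse (exp (hb / 2))))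
              (tn * un) (- (tn * inverse un))
              (coordmap N1 k m (\<lambda>j. hb * complex_of_real (lam' j))) (coordmap N1 k m x)
     = (\<Sum>i\<in>{1..N1}. \<Sum>\<epsilon>\<in>{1,-1}. if lam' = unitv i \<epsilon> then A i \<epsilon> else 0)
     + (\<Sum>L<m. \<Sum>\<epsilon>\<in>{1,-1}. if lam' = bavg N1 k L \<epsilon> then cB * B (Suc L) \<epsilon> else 0)
     + (if lam' = Z then - (\<Sum>i\<in>{1..N1}. \<Sum>\<epsilon>\<in>{1,-1}. A i \<epsilon>) - cB * (\<Sum>L<m. \<Sum>\<epsilon>\<in>{1,-1}. B (Suc L) \<epsilon>) else 0)"
    unfolding gk_op_def Let_def Phi_eq A_def[symmetric] B_def[symmetric] cB_def[symmetric] g1 g2 g3 sum_1m[of "\<lambda>l. \<Sum>\<epsilon>\<in>{1,-1}. B l \<epsilon>"] ..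
  have ifm: "(if P then 1 else 0) * a = (if P then a else 0)" for P and a :: complex by simp
  have ifm2: "c * (if P then a else 0) = (if P then c * a else 0)" for P and a c :: complex by simp
  have ifm3: "(if P then a else 0) + (if P then b else 0) = (if P then a + b else 0)" for P and a b :: complex by simp
  define ic where "ic = inverse (t0 * tn)"
  show ?thesis
    unfolding S_def[symmetric] Z_def[symmetric] lhs rhs ifm ic_def[symmetric]
    by (cases "lam' = Z") (simp_all add: sum_distrib_left ifm2 algebra_simps)
qed

end


lemma ev_exp:
  fixes A B Z0 :: complex and r :: real
  assumes r: "r \<noteq> 0" and AB: "A \<noteq> 0 \<or> B \<noteq> 0"
  shows "\<forall>\<^sub>F t in at_right 0. A * exp (Z0 + complex_of_real (t * r)) \<noteq> B"
proof (cases "A = 0")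
  case True then show ?thesis using AB by simp
next
  case A: False
  show ?thesis
  proof (cases "\<exists>t0. A * exp (Z0 + complex_of_real (t0 * r)) = B")
    case False then show ?thesis by simp
  next
    case True
    then obtain t0 where t0: "A * exp (Z0 + complex_of_real (t0 * r)) = B" by blast
    have nz: "A * exp (Z0 + complex_of_real (t * r)) \<noteq> B" if "t \<noteq> t0" for t
    proof
      assume "A * exp (Z0 + complex_of_real (t * r)) = B"
      then have "A * exp (Z0 + complex_of_real (t * r)) = A * exp (Z0 + complex_of_real (t0 * r))"
        using t0 by simp
      then have "exp (Z0 + complex_of_real (t * r)) = exp (Z0 + complex_of_real (t0 * r))"
        using A by (simp only: mult_cancel_left) simp
      then have "cmod (exp (Z0 + complex_of_real (t * r))) = cmod (exp (Z0 + complex_of_real (t0 * r)))" by simp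
      then have "exp (Re Z0 + t * r) = exp (Re Z0 + t0 * r)" by (simp add: norm_exp_eq_Re)
      then have "t * r = t0 * r" by simp
      then show False using that r by simp
    qed
    have ev: "\<forall>\<^sub>F w in at_right 0. w \<noteq> t0" by (rule eventually_neq_at_within)
    show ?thesis by (rule eventually_mono[OF ev]) (rule nz)
  qed
qed

lemma ev_gden:
  assumes W: "\<And>t. W t = Z0 + complex_of_real (t * r)" and r: "r \<noteq> 0" and b: "b \<noteq> 0"
  shows "\<forall>\<^sub>F t in at_right 0. gden (W t) b \<noteq> 0"
  using ev_exp[OF r, of b "inverse b" Z0] b by (simp add: gden_def W)

lemma ev_one:
  assumes W: "\<And>t. W t = Z0 + complex_of_real (t * r)" and r: "r \<noteq> 0"
  shows "\<forall>\<^sub>F t in at_right 0. 1 - C * exp (W t) \<noteq> 0"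
  using ev_exp[OF r, of C 1 Z0] by (simp add: W)

context
  fixes k m N1 n :: nat and \<eta> hb :: complex and x :: "nat \<Rightarrow> complex"
  assumes k2: "k \<ge> 2" and nk: "n = N1 + m * k"
    and hk: "hb = of_nat k * \<eta>"
    and hq: "\<forall>r\<in>(\<rat>::real set). hb \<noteq> \<i> * complex_of_real (pi * r)"
    and x: "x \<in> D0 n (S0_blocks N1 k m) \<eta>"
begin

definition uw :: "nat \<Rightarrow> real" where
  "uw j = (if 1 \<le> j \<and> j \<le> N1 then real j else if N1 < j \<and> j \<le> n then real (N1 + (j - N1 - 1) div k + 1) else 0)"

definition xp :: "real \<Rightarrow> nat \<Rightarrow> complex" where
  "xp t j = x j + complex_of_real (t * uw j)"

lemma uw_blk: assumes "L < m" "r < k" shows "uw (N1 + k*L + r + 1) = real (N1 + L + 1)"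
proof -
  have "N1 + k*L + r + 1 \<le> n" using blk_range(2)[OF assms, of N1] nk by simp
  moreover have "(k*L + r) div k = L" using assms by simp
  ultimately show ?thesis unfolding uw_def by simp
qed

lemma blk_of:
  assumes "N1 < j" "j \<le> n"
  obtains L r where "L < m" "r < k" "j = N1 + k*L + r + 1"
proof -
  define L where "L = (j - N1 - 1) div k"
  define r where "r = (j - N1 - 1) mod k"
  have rk: "r < k" using k2 r_def by simp
  have jeq: "j = N1 + k*L + r + 1" using assms unfolding L_def r_def by simp
  have "j - N1 - 1 < m * k" using assms nk by simp
  then have Lm: "L < m" unfolding L_def using k2 by (simp add: less_mult_imp_div_less)
  show ?thesis using that Lm rk jeq by blast
qed

lemma uw_pos: assumes "j \<in> {1..n}" shows "uw j \<ge> 1"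
  using assms unfolding uw_def by auto

lemma uw_le: assumes "j \<in> {1..n}" shows "uw j \<le> real (N1 + m)"
proof (cases "j \<le> N1")
  case True then show ?thesis using assms unfolding uw_def by auto
next
  case False
  moreover have "j \<le> n" using assms by simp
  ultimately obtain L r where "L < m" "r < k" "j = N1 + k*L + r + 1" using blk_of by (metis not_le)
  then show ?thesis using uw_blk by simp
qed

lemma uw_out: assumes "j \<notin> {1..n}" shows "uw j = 0"
  using assms nk unfolding uw_def by auto

lemma xp_D0: "xp t \<in> D0 n (S0_blocks N1 k m) \<eta>"
  unfolding D0_def
proof (intro CollectI conjI allI impI)
  fix j assume "j \<notin> {1..n}"
  then show "xp t j = 0" using x uw_out unfolding D0_def xp_def by simp
next
  fix p assume p: "simple_root p \<in> S0_blocks N1 k m"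
  then obtain L r where Lr: "L < m" "Suc r < k" "p = N1 + k*L + r + 1" using S0_mem by blast
  have "uw p = uw (Suc p)" using uw_blk[of L r] uw_blk[of L "Suc r"] Lr by simp
  moreover have "x p - x (Suc p) = \<eta>" using x p unfolding D0_def by blast
  ultimately show "xp t p - xp t (Suc p) = \<eta>" unfolding xp_def by simp
qed

lemma cm_xp:
  assumes i: "i \<in> {1..N1 + m}"
  shows "coordmap N1 k m (xp t) i = coordmap N1 k m x i + complex_of_real (t * real i)"
proof (cases "i \<le> N1")
  case True then show ?thesis using i by (simp add: coordmap_def xp_def uw_def)
next
  case False
  define L where "L = i - N1 - 1"
  have L: "L < m" and iL: "i = N1 + Suc L" using False i L_def by auto
  have "(\<Sum>s<k. xp t (N1 + k * (i - N1) - s)) = (\<Sum>s<k. x (N1 + k * (i - N1) - s)) + of_nat k * complex_of_real (t * real i)"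
  proof -
    have "(\<Sum>s<k. xp t (N1 + k * (i - N1) - s)) = (\<Sum>s<k. x (N1 + k * (i - N1) - s) + complex_of_real (t * real i))"
    proof (rule sum.cong[OF refl])
      fix s assume "s \<in> {..<k}"
      then have s: "k - Suc s < k" and e: "N1 + k * (i - N1) - s = N1 + k*L + (k - Suc s) + 1"
        using iL by auto
      show "xp t (N1 + k * (i - N1) - s) = x (N1 + k * (i - N1) - s) + complex_of_real (t * real i)"
        unfolding xp_def unfolding e unfolding uw_blk[OF L s] iL by simp
    qed
    then show ?thesis by (simp add: sum.distrib)
  qed
  moreover have "(of_nat k :: complex) \<noteq> 0" using k2 by simp
  ultimately show ?thesis using False i by (simp add: coordmap_def field_simps)
qed

lemma same_class:
  assumes i: "i \<in> {1..n}" and j: "j \<in> {1..n}" and ij: "i \<noteq> j" and u: "uw i = uw j"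
  shows "\<exists>d::int. d \<noteq> 0 \<and> x i - x j = of_int d * \<eta>"
proof -
  have iN: "N1 < i"
  proof (rule ccontr)
    assume "\<not> N1 < i"
    then have ui: "uw i = real i" using i by (simp add: uw_def)
    show False
    proof (cases "j \<le> N1")
      case True then show False using u ui ij j by (simp add: uw_def)
    next
      case False
      moreover have "j \<le> n" using j by simp
      ultimately obtain L r where "L < m" "r < k" "j = N1 + k*L + r + 1" using blk_of by (metis not_le)
      then show False using u ui uw_blk \<open>\<not> N1 < i\<close> by simp
    qed
  qed
  have jN: "N1 < j"
  proof (rule ccontr)
    assume "\<not> N1 < j"
    then have uj: "uw j = real j" using j by (simp add: uw_def)
    obtain L r where "L < m" "r < k" "i = N1 + k*L + r + 1" using blk_of iN i by auto
    then show False using u uj uw_blk \<open>\<not> N1 < j\<close> by simp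
  qed
  obtain L r where L: "L < m" "r < k" "i = N1 + k*L + r + 1" using blk_of iN i by auto
  obtain L' r' where L': "L' < m" "r' < k" "j = N1 + k*L' + r' + 1" using blk_of jN j by auto
  have "L = L'" using u uw_blk[OF L(1,2)] uw_blk[OF L'(1,2)] L(3) L'(3) by simp
  then have rr: "r \<noteq> r'" using ij L L' by auto
  have "x i - x j = of_int (int r' - int r) * \<eta>"
    unfolding L(3) L'(3) D0_blk[OF x L(1,2)] using D0_blk[OF x L'(1,2)] \<open>L = L'\<close> by (simp add: algebra_simps)
  then show ?thesis using rr by (intro exI[of _ "int r' - int r"]) simp
qed

lemma ev_always: "(\<And>t. P t) \<Longrightarrow> \<forall>\<^sub>F t in F. P t" by simp

lemma eps_cases: "\<epsilon> \<in> {1, -1::real} \<Longrightarrow> \<epsilon> = 1 \<or> \<epsilon> = -1" by auto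

lemma kr_pair:
  assumes i: "i \<in> {1..n}" and j: "j \<in> {1..n} - {i}" and e: "\<epsilon> \<in> {1, -1::real}"
  shows "\<forall>\<^sub>F t in at_right 0. gden (complex_of_real \<epsilon> * xp t i - xp t j) 1 \<noteq> 0 \<and> gden (complex_of_real \<epsilon> * xp t i + xp t j) 1 \<noteq> 0"
proof (rule eventually_conj)
  have j': "j \<in> {1..n}" "i \<noteq> j" using j by auto
  have ui: "uw i \<ge> 1" and uj: "uw j \<ge> 1" using uw_pos i j' by auto
  define r1 where "r1 = \<epsilon> * uw i - uw j"
  define r2 where "r2 = \<epsilon> * uw i + uw j"
  have W1: "complex_of_real \<epsilon> * xp t i - xp t j = (complex_of_real \<epsilon> * x i - x j) + complex_of_real (t * r1)" for t
    unfolding xp_def r1_def by (simp add: algebra_simps)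
  have W2: "complex_of_real \<epsilon> * xp t i + xp t j = (complex_of_real \<epsilon> * x i + x j) + complex_of_real (t * r2)" for t
    unfolding xp_def r2_def by (simp add: algebra_simps)
  show "\<forall>\<^sub>F t in at_right 0. gden (complex_of_real \<epsilon> * xp t i - xp t j) 1 \<noteq> 0"
  proof (cases "r1 = 0")
    case False then show ?thesis by (rule ev_gden[OF W1]) simp
  next
    case True
    then have "\<epsilon> = 1" "uw i = uw j" using eps_cases[OF e] ui uj unfolding r1_def by auto
    then obtain d :: int where d: "d \<noteq> 0" "x i - x j = of_int d * \<eta>" using same_class[OF i j'(1) j'(2)] by blast
    have "exp (of_int d * \<eta>) \<noteq> 1" by (rule exp_int_ne1[OF hq hk d(1)])
    then show ?thesis using \<open>\<epsilon> = 1\<close> True d unfolding W1 by (intro ev_always) (simp add: gden1)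
  qed
  show "\<forall>\<^sub>F t in at_right 0. gden (complex_of_real \<epsilon> * xp t i + xp t j) 1 \<noteq> 0"
  proof (cases "r2 = 0")
    case False then show ?thesis by (rule ev_gden[OF W2]) simp
  next
    case True
    then have "\<epsilon> = -1" "uw i = uw j" using eps_cases[OF e] ui uj unfolding r2_def by auto
    then obtain d :: int where d: "d \<noteq> 0" "x i - x j = of_int d * \<eta>" using same_class[OF i j'(1) j'(2)] by blast
    have "exp (of_int (- d) * \<eta>) \<noteq> 1" by (rule exp_int_ne1[OF hq hk]) (use d in simp)
    moreover have "- x i + x j = of_int (- d) * \<eta>" using d by (simp add: algebra_simps)
    ultimately show ?thesis using \<open>\<epsilon> = -1\<close> True unfolding W2 by (intro ev_always) (simp add: gden1)
  qed
qed

lemma kr_single: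
  assumes i: "i \<in> {1..n}" and e: "\<epsilon> \<in> {1, -1::real}"
  shows "\<forall>\<^sub>F t in at_right 0. 1 - C * exp (2 * complex_of_real \<epsilon> * xp t i) \<noteq> 0"
proof (rule ev_one)
  show "2 * complex_of_real \<epsilon> * xp t i = 2 * complex_of_real \<epsilon> * x i + complex_of_real (t * (2 * \<epsilon> * uw i))" for t
    unfolding xp_def by (simp add: algebra_simps)
  show "2 * \<epsilon> * uw i \<noteq> 0" using uw_pos[OF i] eps_cases[OF e] by auto
qed

lemma ev_koorn: "\<forall>\<^sub>F t in at_right 0. koorn_regular n hb (xp t)"
proof -
  have "\<forall>\<^sub>F t in at_right 0. \<forall>i\<in>{1..n}. \<forall>\<epsilon>\<in>{1, -1::real}.
     (\<forall>j\<in>{1..n} - {i}. gden (complex_of_real \<epsilon> * xp t i - xp t j) 1 \<noteq> 0 \<and> gden (complex_of_real \<epsilon> * xp t i + xp t j) 1 \<noteq> 0) \<and>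
     1 - (inverse (exp (hb / 2)))^2 * exp (2 * complex_of_real \<epsilon> * xp t i) \<noteq> 0 \<and>
     1 - exp (2 * complex_of_real \<epsilon> * xp t i) \<noteq> 0"
  proof (intro eventually_ball_finite ballI finite_atLeastAtMost finite.intros)
    fix i \<epsilon> assume i: "i \<in> {1..n}" and e: "\<epsilon> \<in> {1, -1::real}"
    have a: "\<forall>\<^sub>F t in at_right 0. \<forall>j\<in>{1..n} - {i}. gden (complex_of_real \<epsilon> * xp t i - xp t j) 1 \<noteq> 0 \<and> gden (complex_of_real \<epsilon> * xp t i + xp t j) 1 \<noteq> 0"
      by (intro eventually_ball_finite ballI kr_pair[OF i _ e]) simp_all
    have b: "\<forall>\<^sub>F t in at_right 0. 1 - exp (2 * complex_of_real \<epsilon> * xp t i) \<noteq> 0"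
      using kr_single[OF i e, of 1] by simp
    show "\<forall>\<^sub>F t in at_right 0. (\<forall>j\<in>{1..n} - {i}. gden (complex_of_real \<epsilon> * xp t i - xp t j) 1 \<noteq> 0 \<and> gden (complex_of_real \<epsilon> * xp t i + xp t j) 1 \<noteq> 0) \<and>
     1 - (inverse (exp (hb / 2)))^2 * exp (2 * complex_of_real \<epsilon> * xp t i) \<noteq> 0 \<and>
     1 - exp (2 * complex_of_real \<epsilon> * xp t i) \<noteq> 0"
      by (intro eventually_conj a b kr_single[OF i e])
  qed
  then show ?thesis
    by (rule eventually_mono) (simp only: koorn_regular_def Let_def)
qed

lemma gk_m:
  assumes a: "a \<in> {1..N1 + m}" and b: "b \<in> {1..N1 + m}" and ab: "a \<noteq> b" and e: "\<epsilon> \<in> {1, -1::real}" and c: "c \<noteq> 0"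
  shows "\<forall>\<^sub>F t in at_right 0. gden (complex_of_real \<epsilon> * coordmap N1 k m (xp t) a - coordmap N1 k m (xp t) b) c \<noteq> 0"
  proof (rule ev_gden[OF _ _ c])
    show "complex_of_real \<epsilon> * coordmap N1 k m (xp t) a - coordmap N1 k m (xp t) b =
      (complex_of_real \<epsilon> * coordmap N1 k m x a - coordmap N1 k m x b) + complex_of_real (t * (\<epsilon> * real a - real b))" for t
      unfolding cm_xp[OF a] cm_xp[OF b] by (simp add: algebra_simps)
    show "\<epsilon> * real a - real b \<noteq> 0" using eps_cases[OF e] ab a b by auto
  qed

lemma gk_p:
  assumes a: "a \<in> {1..N1 + m}" and b: "b \<in> {1..N1 + m}" and ab: "a \<noteq> b" and e: "\<epsilon> \<in> {1, -1::real}" and c: "c \<noteq> 0"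
  shows "\<forall>\<^sub>F t in at_right 0. gden (complex_of_real \<epsilon> * coordmap N1 k m (xp t) a + coordmap N1 k m (xp t) b) c \<noteq> 0"
  proof (rule ev_gden[OF _ _ c])
    show "complex_of_real \<epsilon> * coordmap N1 k m (xp t) a + coordmap N1 k m (xp t) b =
      (complex_of_real \<epsilon> * coordmap N1 k m x a + coordmap N1 k m x b) + complex_of_real (t * (\<epsilon> * real a + real b))" for t
      unfolding cm_xp[OF a] cm_xp[OF b] by (simp add: algebra_simps)
    show "\<epsilon> * real a + real b \<noteq> 0" using eps_cases[OF e] ab a b by auto
  qed

lemma gk_single:
  assumes a: "a \<in> {1..N1 + m}" and e: "\<epsilon> \<in> {1, -1::real}"
  shows "\<forall>\<^sub>F t in at_right 0. 1 - C * exp (2 * complex_of_real \<epsilon> * coordmap N1 k m (xp t) a) \<noteq> 0"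
proof (rule ev_one)
  show "2 * complex_of_real \<epsilon> * coordmap N1 k m (xp t) a = 2 * complex_of_real \<epsilon> * coordmap N1 k m x a + complex_of_real (t * (2 * \<epsilon> * real a))" for t
    unfolding cm_xp[OF a] by (simp add: algebra_simps)
  show "2 * \<epsilon> * real a \<noteq> 0" using eps_cases[OF e] a by auto
qed

lemma gk_single1:
  assumes a: "a \<in> {1..N1 + m}" and e: "\<epsilon> \<in> {1, -1::real}"
  shows "\<forall>\<^sub>F t in at_right 0. 1 - exp (2 * complex_of_real \<epsilon> * coordmap N1 k m (xp t) a) \<noteq> 0"
  using gk_single[OF a e, of 1] by simp

lemma ev_gk: "\<forall>\<^sub>F t in at_right 0. gk_regular N1 m hb \<eta> (coordmap N1 k m (xp t))"
proof -
  have c1: "inverse (exp (hb / 4)) * exp (\<eta> / 4) \<noteq> 0" "exp (hb / 4) * inverse (exp (\<eta> / 4)) \<noteq> 0" "(1::complex) \<noteq> 0" by simp_all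
  have "\<forall>\<^sub>F t in at_right 0. (\<forall>i\<in>{1..N1}. \<forall>\<epsilon>\<in>{1, -1::real}.
        (\<forall>j\<in>{1..N1} - {i}. gden (complex_of_real \<epsilon> * coordmap N1 k m (xp t) i - coordmap N1 k m (xp t) j) 1 \<noteq> 0 \<and> gden (complex_of_real \<epsilon> * coordmap N1 k m (xp t) i + coordmap N1 k m (xp t) j) 1 \<noteq> 0) \<and>
        (\<forall>l\<in>{1..m}. gden (complex_of_real \<epsilon> * coordmap N1 k m (xp t) i - coordmap N1 k m (xp t) (N1 + l)) (inverse (exp (hb / 4)) * exp (\<eta> / 4)) \<noteq> 0 \<and>
                     gden (complex_of_real \<epsilon> * coordmap N1 k m (xp t) i + coordmap N1 k m (xp t) (N1 + l)) (inverse (exp (hb / 4)) * exp (\<eta> / 4)) \<noteq> 0) \<and>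
        1 - (inverse (exp (hb / 2)))^2 * exp (2 * complex_of_real \<epsilon> * coordmap N1 k m (xp t) i) \<noteq> 0 \<and> 1 - exp (2 * complex_of_real \<epsilon> * coordmap N1 k m (xp t) i) \<noteq> 0) \<and>
     (\<forall>l\<in>{1..m}. \<forall>\<epsilon>\<in>{1, -1::real}.
        (\<forall>j\<in>{1..N1}. gden (complex_of_real \<epsilon> * coordmap N1 k m (xp t) (N1 + l) - coordmap N1 k m (xp t) j) (exp (hb / 4) * inverse (exp (\<eta> / 4))) \<noteq> 0 \<and>
                     gden (complex_of_real \<epsilon> * coordmap N1 k m (xp t) (N1 + l) + coordmap N1 k m (xp t) j) (exp (hb / 4) * inverse (exp (\<eta> / 4))) \<noteq> 0) \<and>
        (\<forall>l'\<in>{1..m} - {l}. gden (complex_of_real \<epsilon> * coordmap N1 k m (xp t) (N1 + l) - coordmap N1 k m (xp t) (N1 + l')) 1 \<noteq> 0 \<and> gden (complex_of_real \<epsilon> * coordmap N1 k m (xp t) (N1 + l) + coordmap N1 k m (xp t) (N1 + l')) 1 \<noteq> 0) \<and>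
        1 - (inverse (exp (\<eta> / 2)))^2 * exp (2 * complex_of_real \<epsilon> * coordmap N1 k m (xp t) (N1 + l)) \<noteq> 0 \<and> 1 - exp (2 * complex_of_real \<epsilon> * coordmap N1 k m (xp t) (N1 + l)) \<noteq> 0)"
  proof (intro eventually_conj eventually_ball_finite ballI finite_atLeastAtMost finite.intros finite_Diff)
  qed (rule gk_m gk_p gk_single gk_single1; auto)+
  then show ?thesis
    by (rule eventually_mono) (simp only: gk_regular_def Let_def)
qed

lemma DENS:
  "\<forall>\<epsilon>>0. \<exists>x'\<in>D0 n (S0_blocks N1 k m) \<eta>.
        koorn_regular n hb x' \<and> gk_regular N1 m hb \<eta> (coordmap N1 k m x') \<and>
        (\<forall>j\<in>{1..n}. cmod (x' j - x j) < \<epsilon>)"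
proof (intro allI impI)
  fix \<epsilon> :: real assume ep: "\<epsilon> > 0"
  define \<delta> where "\<delta> = \<epsilon> / (real (N1 + m) + 1)"
  have dpos: "\<delta> > 0" using ep by (simp add: \<delta>_def)
  have "\<forall>\<^sub>F t in at_right 0. t \<in> {0<..<\<delta>} \<and> koorn_regular n hb (xp t) \<and> gk_regular N1 m hb \<eta> (coordmap N1 k m (xp t))"
    by (intro eventually_conj eventually_at_right_real dpos ev_koorn ev_gk)
  then obtain t where t: "t \<in> {0<..<\<delta>}" "koorn_regular n hb (xp t)" "gk_regular N1 m hb \<eta> (coordmap N1 k m (xp t))"
    using eventually_happens'[OF trivial_limit_at_right_real] by blast
  have close: "cmod (xp t j - x j) < \<epsilon>" if j: "j \<in> {1..n}" for j
  proof -
    have "xp t j - x j = complex_of_real (t * uw j)" by (simp add: xp_def)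
    then have "cmod (xp t j - x j) = \<bar>t * uw j\<bar>" by (simp only: norm_of_real)
    also have "\<dots> = t * uw j" using t(1) uw_pos[OF j] by simp
    also have "\<dots> \<le> t * real (N1 + m)" using t(1) uw_le[OF j] by (intro mult_left_mono) auto
    also have "\<dots> \<le> \<delta> * real (N1 + m)" using t(1) by (intro mult_right_mono) auto
    also have "\<dots> < \<delta> * (real (N1 + m) + 1)" using dpos by simp
    also have "\<dots> = \<epsilon>" unfolding \<delta>_def by simp
    finally show ?thesis .
  qed
  show "\<exists>x'\<in>D0 n (S0_blocks N1 k m) \<eta>. koorn_regular n hb x' \<and> gk_regular N1 m hb \<eta> (coordmap N1 k m x') \<and>
        (\<forall>j\<in>{1..n}. cmod (x' j - x j) < \<epsilon>)"
    using xp_D0 t close by blast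
qed

end

theorem mainTheorem18:
  fixes k m N1 n :: nat and \<eta>1 hb t0 t1 tn u0 un :: complex
  assumes "k \<ge> 2" and "m \<ge> 1" and "n = N1 + m * k"
    and "hb = of_nat k * \<eta>1"
    and "\<forall>r\<in>(\<rat>::real set). hb \<noteq> \<i> * complex_of_real (pi * r)"
    and "t1 = exp (\<eta>1 / 2)"
    and "t0 \<noteq> 0" and "tn \<noteq> 0" and "u0 \<noteq> 0" and "un \<noteq> 0"
  shows
   "(\<forall>x\<in>D0 n (S0_blocks N1 k m) \<eta>1. \<forall>\<epsilon>>0. \<exists>x'\<in>D0 n (S0_blocks N1 k m) \<eta>1.
        koorn_regular n hb x' \<and> gk_regular N1 m hb \<eta>1 (coordmap N1 k m x') \<and>
        (\<forall>j\<in>{1..n}. cmod (x' j - x j) < \<epsilon>)) \<and>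
    (\<forall>x\<in>D0 n (S0_blocks N1 k m) \<eta>1.
       koorn_regular n hb x \<and> gk_regular N1 m hb \<eta>1 (coordmap N1 k m x) \<longrightarrow>
       (\<forall>lam'\<in>Vbar n (S0_blocks N1 k m).
          restrict_coeff n (S0_blocks N1 k m) (koorn_supp n) (koorn_op n hb t0 t1 tn u0 un) lam' x =
          inverse (t0 * tn) *
            gk_op N1 m hb \<eta>1
              (t0 * u0 * inverse (exp (hb / 2))) (- (t0 * inverse u0 * inverse (exp (hb / 2))))
              (tn * un) (- (tn * inverse un))
              (coordmap N1 k m (\<lambda>j. hb * complex_of_real (lam' j))) (coordmap N1 k m x)
          + (if lam' = (\<lambda>_. 0) then kappa_t n t0 t1 tn else 0)))"
  proof (intro conjI)
  show "\<forall>x\<in>D0 n (S0_blocks N1 k m) \<eta>1. \<forall>\<epsilon>>0. \<exists>x'\<in>D0 n (S0_blocks N1 k m) \<eta>1.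
        koorn_regular n hb x' \<and> gk_regular N1 m hb \<eta>1 (coordmap N1 k m x') \<and>
        (\<forall>j\<in>{1..n}. cmod (x' j - x j) < \<epsilon>)"
    using DENS[OF assms(1) assms(3) assms(4) assms(5)] by blast
  show "\<forall>x\<in>D0 n (S0_blocks N1 k m) \<eta>1.
       koorn_regular n hb x \<and> gk_regular N1 m hb \<eta>1 (coordmap N1 k m x) \<longrightarrow>
       (\<forall>lam'\<in>Vbar n (S0_blocks N1 k m).
          restrict_coeff n (S0_blocks N1 k m) (koorn_supp n) (koorn_op n hb t0 t1 tn u0 un) lam' x =
          inverse (t0 * tn) *
            gk_op N1 m hb \<eta>1
              (t0 * u0 * inverse (exp (hb / 2))) (- (t0 * inverse u0 * inverse (exp (hb / 2))))
              (tn * un) (- (tn * inverse un))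
              (coordmap N1 k m (\<lambda>j. hb * complex_of_real (lam' j))) (coordmap N1 k m x)
          + (if lam' = (\<lambda>_. 0) then kappa_t n t0 t1 tn else 0))"
    using IDENT[OF assms(1) assms(3) assms(4) assms(5) assms(6)] by blast
qed

end
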